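(* Let $k\in\hat I$ and $u\in\mathbb C^\times$. Let $V^{(k)}(u)$ be the complex vector space with basis $[u]_j^{(k)}$, $j\in\mathbb Z$ (here $j$ is not taken mod $n$). Define - $E_i(z)[u]^{(k)}_j=\delta(q_1^{j+1}u/z)[u]^{(k)}_{j+1}$ if $i+j+1\equiv k$, and $0$ otherwise; - $F_i(z)[u]^{(k)}_{j+1}=\delta(q_1^{j+1}u/z)[u]^{(k)}_j$ if $i+j+1\equiv k$, and $0$ otherwise; - $K_i^\pm(z)[u]^{(k)}_j$ equal to $\psi(q_1^ju/z)[u]^{(k)}_j$ if $j+i\equiv k$, to $\psi(q_1^jq_3^{-1}u/z)^{-1}[u]^{(k)}_j$ if $j+i+1\equiv k$, and to $[u]^{(k)}_j$ otherwise. Here rational functions in $K_i^\pm(z)$ are expanded in $z^{\mp1}$. Give $V^{(k)}(u)$ the $\mathbb Z^n$-grading $\deg[u]^{(k)}_j=m(1_0+\dots+1_{n-1})+1_k+1_{k-1}+\dots+1_{k-r}$ for $j=mn+r$ with $0\le r\le n-1$ (so $\deg [u]_{-1}^{(k)}=0$). Then these formulas define on $V^{(k)}(u)$ the structure of an irreducible, tame, $\mathbb Z^n$-graded $\mathcal E_n$-module of level $1$.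
   Context: Fix an integer $n\ge3$ and let $\hat I=\{0,1,\dots,n-1\}$. Indices in $\hat I$ are taken cyclically modulo $n$, and for integers $a,b$ we write $a\equiv b$ if $n\mid a-b$. Let $a_{ii}=2$, $a_{i,i\pm1}=-1$ and $a_{ij}=0$ otherwise. Let $m_{i-1,i}=-1$, $m_{i,i-1}=1$ and $m_{ij}=0$ otherwise ($i,j\in\hat I$). Let $q,d\in\mathbb C^\times$ and set $q_1=d/q$, $q_2=q^2$, $q_3=1/(dq)$. Assume $q_1,q_2,q_3$ are generic: $q_1^aq_2^bq_3^c=1$ with $a,b,c\in\mathbb Z$ only if $a=b=c$. Let $\delta(z)=\sum_{m\in\mathbb Z}z^m$ and $\psi(z)=\frac{q-q^{-1}z}{1-z}$. The algebra $\mathcal E_n$ is generated by $E_{i,m},F_{i,m}$ ($i\in\hat I$, $m\in\mathbb Z$), $H_{i,l}$ ($l\ne0$) and $K_i^{\pm1}$. Its generating series are $E_i(z)=\sum_mE_{i,m}z^{-m}$, $F_i(z)=\sum_mF_{i,m}z^{-m}$ and $K_i^\pm(z)=K_i^{\pm1}\exp(\pm(q-q^{-1})\sum_{m\ge1}H_{i,\pm m}z^{\mp m})$. The defining relations are: - $K_iK_i^{-1}=K_i^{-1}K_i=1$, and all coefficients of the $K_i^\pm(z)$ commute; - $(q^{a_{ij}}w-d^{m_{ij}}z)K_i^\pm(z)E_j(w)=(w-d^{m_{ij}}q^{a_{ij}}z)E_j(w)K_i^\pm(z)$; - $(w-d^{m_{ij}}q^{a_{ij}}z)K_i^\pm(z)F_j(w)=(q^{a_{ij}}w-d^{m_{ij}}z)F_j(w)K_i^\pm(z)$;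 - $[E_i(z),F_j(w)]=\frac{\delta_{ij}}{q-q^{-1}}(\delta(w/z)K_i^+(w)-\delta(z/w)K_i^-(z))$; - $(d^{m_{ij}}z-q^{a_{ij}}w)E_i(z)E_j(w)=(d^{m_{ij}}q^{a_{ij}}z-w)E_j(w)E_i(z)$; - $(d^{m_{ij}}z-q^{-a_{ij}}w)F_i(z)F_j(w)=(d^{m_{ij}}q^{-a_{ij}}z-w)F_j(w)F_i(z)$; - the Serre relations $E_i(z_1)E_i(z_2)E_{i\pm1}(w)-(q+q^{-1})E_i(z_1)E_{i\pm1}(w)E_i(z_2)+E_{i\pm1}(w)E_i(z_1)E_i(z_2)+(z_1\leftrightarrow z_2)=0$, and the same with $F$; - $[E_i(z),E_j(w)]=[F_i(z),F_j(w)]=0$ for $i\not\equiv j,j\pm1$. Put $\kappa=\prod_iK_i$. Terminology for a module $V$: - $V$ is weighted if the $K_i^\pm(z)$ are simultaneously diagonalizable, and tame if moreover the joint eigenspaces are one-dimensional. - $V$ has level $K$ if $\kappa^{-1}$ acts by $K$. - $V$ is $\mathbb Z^n$-graded if it is graded compatibly with $\deg E_{i,m}=1_i$, $\deg F_{i,m}=-1_i$ and $\deg H,\deg K=0$, where $1_0,\dots,1_{n-1}$ is the standard basis of $\mathbb Z^n$. *)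

theory Defs
  imports "HOL-Computational_Algebra.Formal_Power_Series"
begin

(* Vectors of V^(k)(u): coefficient functions j |-> coefficient of [u]_j;
   elements of V are those with finite support (set Vfin).
   Operators are functions vec => vec; relations are required on Vfin. *)
type_synonym vec = "int \<Rightarrow> complex"
type_synonym op = "vec \<Rightarrow> vec"

definition Vfin :: "vec set" where "Vfin = {v. finite {j. v j \<noteq> 0}}"
definition vzero :: vec where "vzero = (\<lambda>j. 0)"
definition oadd :: "op \<Rightarrow> op \<Rightarrow> op" where "oadd A B = (\<lambda>v j. A v j + B v j)"
definition osub :: "op \<Rightarrow> op \<Rightarrow> op" where "osub A B = (\<lambda>v j. A v j - B v j)"
definition osc :: "complex \<Rightarrow> op \<Rightarrow> op" where "osc c A = (\<lambda>v j. c * A v j)"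
definition ozero :: op where "ozero = (\<lambda>v j. 0)"
definition oeq :: "op \<Rightarrow> op \<Rightarrow> bool" where "oeq A B \<longleftrightarrow> (\<forall>v\<in>Vfin. A v = B v)"
definition ocomp_list :: "op list \<Rightarrow> op" where "ocomp_list As = foldr (\<circ>) As id"

definition lin_op :: "op \<Rightarrow> bool" where
  "lin_op A \<longleftrightarrow> (\<forall>v\<in>Vfin. A v \<in> Vfin) \<and>
     (\<forall>v\<in>Vfin. \<forall>w\<in>Vfin. A (\<lambda>j. v j + w j) = (\<lambda>j. A v j + A w j)) \<and>
     (\<forall>c. \<forall>v\<in>Vfin. A (\<lambda>j. c * v j) = (\<lambda>j. c * A v j))"

definition cong_n :: "nat \<Rightarrow> int \<Rightarrow> int \<Rightarrow> bool" where
  "cong_n n a b \<longleftrightarrow> a mod int n = b mod int n"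

definition cartan :: "nat \<Rightarrow> int \<Rightarrow> int \<Rightarrow> int" where
  "cartan n i j = (if cong_n n i j then 2
                   else if cong_n n i (j + 1) \<or> cong_n n i (j - 1) then -1 else 0)"

definition mmat :: "nat \<Rightarrow> int \<Rightarrow> int \<Rightarrow> int" where
  "mmat n i j = (if cong_n n i (j - 1) then -1 else if cong_n n i (j + 1) then 1 else 0)"

definition q1 :: "complex \<Rightarrow> complex \<Rightarrow> complex" where "q1 q d = d / q"
definition q2 :: "complex \<Rightarrow> complex \<Rightarrow> complex" where "q2 q d = q ^ 2"
definition q3 :: "complex \<Rightarrow> complex \<Rightarrow> complex" where "q3 q d = 1 / (d * q)"

definition generic :: "complex \<Rightarrow> complex \<Rightarrow> bool" where
  "generic q d \<longleftrightarrow> (\<forall>a b c :: int.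
      (q1 q d) powi a * (q2 q d) powi b * (q3 q d) powi c = 1 \<longrightarrow> a = b \<and> b = c)"

(* coefficient of z^{-r} in exp(sum_{m>=1} A_m z^{-m}) = sum_k (1/k!) (sum_m A_m z^{-m})^k *)
definition expcoef :: "(nat \<Rightarrow> op) \<Rightarrow> nat \<Rightarrow> op" where
  "expcoef A r = (\<lambda>v j. \<Sum>ms\<in>{ms. length ms \<le> r \<and> (\<forall>m\<in>set ms. 0 < m) \<and> sum_list ms = r}.
       (1 / fact (length ms)) * ocomp_list (map A ms) v j)"

(* Convention: K^+_i(z) = sum_r Kplus i r z^{-r} (zero for r<0),
   K^-_i(z) = sum_r Kminus i r z^{-r} (zero for r>0). *)
definition Kplus :: "complex \<Rightarrow> (int \<Rightarrow> op) \<Rightarrow> (int \<Rightarrow> int \<Rightarrow> op) \<Rightarrow> int \<Rightarrow> int \<Rightarrow> op" where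
  "Kplus q K H i r = (if r < 0 then ozero
      else K i \<circ> expcoef (\<lambda>m. osc (q - inverse q) (H i (int m))) (nat r))"

definition Kminus :: "complex \<Rightarrow> (int \<Rightarrow> op) \<Rightarrow> (int \<Rightarrow> int \<Rightarrow> op) \<Rightarrow> int \<Rightarrow> int \<Rightarrow> op" where
  "Kminus q Kinv H i r = (if 0 < r then ozero
      else Kinv i \<circ> expcoef (\<lambda>m. osc (- (q - inverse q)) (H i (- int m))) (nat (- r)))"

definition serre :: "complex \<Rightarrow> (int \<Rightarrow> int \<Rightarrow> op) \<Rightarrow> int \<Rightarrow> int \<Rightarrow> int \<Rightarrow> int \<Rightarrow> int \<Rightarrow> op" where
  "serre q X i j r1 r2 s =
     oadd (osub (X i r1 \<circ> X i r2 \<circ> X j s) (osc (q + inverse q) (X i r1 \<circ> X j s \<circ> X i r2)))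
          (X j s \<circ> X i r1 \<circ> X i r2)"

(* Module over E_n: action of generators E_{i,m}, F_{i,m}, H_{i,l} (l \<noteq> 0), K_i, K_i^{-1}
   (i in {0..n-1}) by linear operators on V satisfying the defining relations,
   the series relations being written coefficientwise. *)
definition En_module :: "nat \<Rightarrow> complex \<Rightarrow> complex \<Rightarrow> (int \<Rightarrow> int \<Rightarrow> op) \<Rightarrow> (int \<Rightarrow> int \<Rightarrow> op)
    \<Rightarrow> (int \<Rightarrow> int \<Rightarrow> op) \<Rightarrow> (int \<Rightarrow> op) \<Rightarrow> (int \<Rightarrow> op) \<Rightarrow> bool" where
  "En_module n q d E F H K Kinv \<longleftrightarrow>
    (let I = {0..<int n};
         KK = (\<lambda>s. if s then Kplus q K H else Kminus q Kinv H) in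
    (\<forall>i\<in>I. \<forall>m. lin_op (E i m) \<and> lin_op (F i m)) \<and>
    (\<forall>i\<in>I. \<forall>l. l \<noteq> 0 \<longrightarrow> lin_op (H i l)) \<and>
    (\<forall>i\<in>I. lin_op (K i) \<and> lin_op (Kinv i)) \<and>
    (\<forall>i\<in>I. oeq (K i \<circ> Kinv i) id \<and> oeq (Kinv i \<circ> K i) id) \<and>
    (\<forall>s t. \<forall>i\<in>I. \<forall>j\<in>I. \<forall>r r'. oeq (KK s i r \<circ> KK t j r') (KK t j r' \<circ> KK s i r)) \<and>
    (\<forall>s. \<forall>i\<in>I. \<forall>j\<in>I. \<forall>r r'.
       oeq (osub (osc (q powi cartan n i j) (KK s i r \<circ> E j (r' + 1)))
                 (osc (d powi mmat n i j) (KK s i (r + 1) \<circ> E j r')))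
           (osub (E j (r' + 1) \<circ> KK s i r)
                 (osc (d powi mmat n i j * q powi cartan n i j) (E j r' \<circ> KK s i (r + 1))))) \<and>
    (\<forall>s. \<forall>i\<in>I. \<forall>j\<in>I. \<forall>r r'.
       oeq (osub (KK s i r \<circ> F j (r' + 1))
                 (osc (d powi mmat n i j * q powi cartan n i j) (KK s i (r + 1) \<circ> F j r')))
           (osub (osc (q powi cartan n i j) (F j (r' + 1) \<circ> KK s i r))
                 (osc (d powi mmat n i j) (F j r' \<circ> KK s i (r + 1))))) \<and>
    (\<forall>i\<in>I. \<forall>j\<in>I. \<forall>a b.
       oeq (osub (E i a \<circ> F j b) (F j b \<circ> E i a))
           (if i = j then osc (inverse (q - inverse q)) (osub (KK True i (a + b)) (KK False i (a + b)))
            else ozero)) \<and>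
    (\<forall>i\<in>I. \<forall>j\<in>I. \<forall>r s.
       oeq (osub (osc (d powi mmat n i j) (E i (r + 1) \<circ> E j s))
                 (osc (q powi cartan n i j) (E i r \<circ> E j (s + 1))))
           (osub (osc (d powi mmat n i j * q powi cartan n i j) (E j s \<circ> E i (r + 1)))
                 (E j (s + 1) \<circ> E i r))) \<and>
    (\<forall>i\<in>I. \<forall>j\<in>I. \<forall>r s.
       oeq (osub (osc (d powi mmat n i j) (F i (r + 1) \<circ> F j s))
                 (osc (q powi (- cartan n i j)) (F i r \<circ> F j (s + 1))))
           (osub (osc (d powi mmat n i j * q powi (- cartan n i j)) (F j s \<circ> F i (r + 1)))
                 (F j (s + 1) \<circ> F i r))) \<and>
    (\<forall>i\<in>I. \<forall>j\<in>I. (cong_n n j (i + 1) \<or> cong_n n j (i - 1)) \<longrightarrow>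
       (\<forall>r1 r2 s. oeq (oadd (serre q E i j r1 r2 s) (serre q E i j r2 r1 s)) ozero \<and>
                  oeq (oadd (serre q F i j r1 r2 s) (serre q F i j r2 r1 s)) ozero)) \<and>
    (\<forall>i\<in>I. \<forall>j\<in>I. (\<not> cong_n n i j \<and> \<not> cong_n n i (j + 1) \<and> \<not> cong_n n i (j - 1)) \<longrightarrow>
       (\<forall>r s. oeq (E i r \<circ> E j s) (E j s \<circ> E i r) \<and> oeq (F i r \<circ> F j s) (F j s \<circ> F i r))))"

definition eigsp :: "nat \<Rightarrow> (int \<Rightarrow> int \<Rightarrow> op) \<Rightarrow> (int \<Rightarrow> int \<Rightarrow> op)
    \<Rightarrow> (bool \<Rightarrow> int \<Rightarrow> int \<Rightarrow> complex) \<Rightarrow> vec set" where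
  "eigsp n Kp Km lam = {v\<in>Vfin. \<forall>i\<in>{0..<int n}. \<forall>r.
      Kp i r v = (\<lambda>j. lam True i r * v j) \<and> Km i r v = (\<lambda>j. lam False i r * v j)}"

definition weighted :: "nat \<Rightarrow> (int \<Rightarrow> int \<Rightarrow> op) \<Rightarrow> (int \<Rightarrow> int \<Rightarrow> op) \<Rightarrow> bool" where
  "weighted n Kp Km \<longleftrightarrow> (\<forall>v\<in>Vfin. \<exists>ws. (\<forall>w\<in>set ws. \<exists>lam. w \<in> eigsp n Kp Km lam)
        \<and> v = (\<lambda>j. \<Sum>w\<leftarrow>ws. w j))"

definition tame :: "nat \<Rightarrow> (int \<Rightarrow> int \<Rightarrow> op) \<Rightarrow> (int \<Rightarrow> int \<Rightarrow> op) \<Rightarrow> bool" where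
  "tame n Kp Km \<longleftrightarrow> weighted n Kp Km \<and>
     (\<forall>lam. \<forall>v\<in>eigsp n Kp Km lam. \<forall>w\<in>eigsp n Kp Km lam.
        v \<noteq> vzero \<longrightarrow> (\<exists>c. w = (\<lambda>j. c * v j)))"

definition level :: "nat \<Rightarrow> (int \<Rightarrow> op) \<Rightarrow> complex \<Rightarrow> bool" where
  "level n Kinv c \<longleftrightarrow> (\<forall>v\<in>Vfin. ocomp_list (map (\<lambda>i. Kinv (int i)) [0..<n]) v = (\<lambda>j. c * v j))"

definition subspace_V :: "vec set \<Rightarrow> bool" where
  "subspace_V W \<longleftrightarrow> W \<subseteq> Vfin \<and> vzero \<in> W \<and> (\<forall>v\<in>W. \<forall>w\<in>W. (\<lambda>j. v j + w j) \<in> W)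
      \<and> (\<forall>c. \<forall>v\<in>W. (\<lambda>j. c * v j) \<in> W)"

definition irreducible_mod :: "nat \<Rightarrow> (int \<Rightarrow> int \<Rightarrow> op) \<Rightarrow> (int \<Rightarrow> int \<Rightarrow> op)
    \<Rightarrow> (int \<Rightarrow> int \<Rightarrow> op) \<Rightarrow> (int \<Rightarrow> op) \<Rightarrow> (int \<Rightarrow> op) \<Rightarrow> bool" where
  "irreducible_mod n E F H K Kinv \<longleftrightarrow> Vfin \<noteq> {vzero} \<and>
    (\<forall>W. subspace_V W \<and>
        (\<forall>i\<in>{0..<int n}. (\<forall>m. E i m ` W \<subseteq> W \<and> F i m ` W \<subseteq> W) \<and>
            (\<forall>l. l \<noteq> 0 \<longrightarrow> H i l ` W \<subseteq> W) \<and> K i ` W \<subseteq> W \<and> Kinv i ` W \<subseteq> W)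
      \<longrightarrow> W = {vzero} \<or> W = Vfin)"

(* Z^n-grading: degree of [u]_j, as function of the component a in {0..n-1} *)
definition deg :: "nat \<Rightarrow> int \<Rightarrow> int \<Rightarrow> int \<Rightarrow> int" where
  "deg n k j a = j div int n + (if (k - a) mod int n \<le> j mod int n then 1 else 0)"

definition Vhom :: "nat \<Rightarrow> (int \<Rightarrow> int \<Rightarrow> int) \<Rightarrow> (int \<Rightarrow> int) \<Rightarrow> vec set" where
  "Vhom n dg \<alpha> = {v\<in>Vfin. \<forall>j. v j \<noteq> 0 \<longrightarrow> (\<forall>a\<in>{0..<int n}. dg j a = \<alpha> a)}"

definition unitv :: "int \<Rightarrow> int \<Rightarrow> int" where "unitv i = (\<lambda>a. if a = i then 1 else 0)"

definition graded :: "nat \<Rightarrow> (int \<Rightarrow> int \<Rightarrow> int) \<Rightarrow> (int \<Rightarrow> int \<Rightarrow> op) \<Rightarrow> (int \<Rightarrow> int \<Rightarrow> op)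
    \<Rightarrow> (int \<Rightarrow> int \<Rightarrow> op) \<Rightarrow> (int \<Rightarrow> op) \<Rightarrow> (int \<Rightarrow> op) \<Rightarrow> bool" where
  "graded n dg E F H K Kinv \<longleftrightarrow> (\<forall>\<alpha>. \<forall>i\<in>{0..<int n}.
     (\<forall>m. \<forall>v\<in>Vhom n dg \<alpha>. E i m v \<in> Vhom n dg (\<lambda>a. \<alpha> a + unitv i a)
                        \<and> F i m v \<in> Vhom n dg (\<lambda>a. \<alpha> a - unitv i a)) \<and>
     (\<forall>l. l \<noteq> 0 \<longrightarrow> (\<forall>v\<in>Vhom n dg \<alpha>. H i l v \<in> Vhom n dg \<alpha>)) \<and>
     (\<forall>v\<in>Vhom n dg \<alpha>. K i v \<in> Vhom n dg \<alpha> \<and> Kinv i v \<in> Vhom n dg \<alpha>))"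

(* psi(x/z) expanded in z^{-1} (power series in t = z^{-1}) and in z (power series in z) *)
definition psi_plus :: "complex \<Rightarrow> complex \<Rightarrow> complex fps" where
  "psi_plus q x = (fps_const q - fps_const (x / q) * fps_X) * inverse (1 - fps_const x * fps_X)"
definition psi_minus :: "complex \<Rightarrow> complex \<Rightarrow> complex fps" where
  "psi_minus q x = (fps_const q * fps_X - fps_const (x / q)) * inverse (fps_X - fps_const x)"

definition VE :: "nat \<Rightarrow> complex \<Rightarrow> complex \<Rightarrow> int \<Rightarrow> complex \<Rightarrow> int \<Rightarrow> int \<Rightarrow> op" where
  "VE n q d k u i m = (\<lambda>v j. if cong_n n (i + j) k
       then ((q1 q d) powi j * u) powi m * v (j - 1) else 0)"
definition VF :: "nat \<Rightarrow> complex \<Rightarrow> complex \<Rightarrow> int \<Rightarrow> complex \<Rightarrow> int \<Rightarrow> int \<Rightarrow> op" where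
  "VF n q d k u i m = (\<lambda>v j. if cong_n n (i + j + 1) k
       then ((q1 q d) powi (j + 1) * u) powi m * v (j + 1) else 0)"

definition kpc :: "nat \<Rightarrow> complex \<Rightarrow> complex \<Rightarrow> int \<Rightarrow> complex \<Rightarrow> int \<Rightarrow> int \<Rightarrow> nat \<Rightarrow> complex" where
  "kpc n q d k u i j r = (if cong_n n (j + i) k then fps_nth (psi_plus q ((q1 q d) powi j * u)) r
      else if cong_n n (j + i + 1) k
        then fps_nth (inverse (psi_plus q ((q1 q d) powi j * inverse (q3 q d) * u))) r
      else (if r = 0 then 1 else 0))"
definition kmc :: "nat \<Rightarrow> complex \<Rightarrow> complex \<Rightarrow> int \<Rightarrow> complex \<Rightarrow> int \<Rightarrow> int \<Rightarrow> nat \<Rightarrow> complex" where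
  "kmc n q d k u i j r = (if cong_n n (j + i) k then fps_nth (psi_minus q ((q1 q d) powi j * u)) r
      else if cong_n n (j + i + 1) k
        then fps_nth (inverse (psi_minus q ((q1 q d) powi j * inverse (q3 q d) * u))) r
      else (if r = 0 then 1 else 0))"

definition VKp :: "nat \<Rightarrow> complex \<Rightarrow> complex \<Rightarrow> int \<Rightarrow> complex \<Rightarrow> int \<Rightarrow> int \<Rightarrow> op" where
  "VKp n q d k u i r = (\<lambda>v j. (if r < 0 then 0 else kpc n q d k u i j (nat r)) * v j)"
definition VKm :: "nat \<Rightarrow> complex \<Rightarrow> complex \<Rightarrow> int \<Rightarrow> complex \<Rightarrow> int \<Rightarrow> int \<Rightarrow> op" where
  "VKm n q d k u i r = (\<lambda>v j. (if 0 < r then 0 else kmc n q d k u i j (nat (- r))) * v j)"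

end

theory Submission
  imports Defs
begin

unbundle fps_syntax

definition dg :: "(int \<Rightarrow> complex) \<Rightarrow> op" where "dg f = (\<lambda>v j. f j * v j)"

lemma ocomp_list_dg:
  assumes "\<forall>m\<in>set ms. A m = dg (h m)"
  shows "ocomp_list (map A ms) v = (\<lambda>j. prod_list (map (\<lambda>m. h m j) ms) * v j)"
  using assms
proof (induction ms arbitrary: v)
  case Nil then show ?case by (simp add: ocomp_list_def)
next
  case (Cons a ms)
  have "ocomp_list (map A (a # ms)) v = A a (ocomp_list (map A ms) v)"
    by (simp add: ocomp_list_def)
  also have "\<dots> = (\<lambda>j. prod_list (map (\<lambda>m. h m j) (a#ms)) * v j)"
    using Cons by (simp add: dg_def mult.assoc)
  finally show ?case .
qed

definition Sr :: "nat \<Rightarrow> nat list set" where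
  "Sr r = {ms. length ms \<le> r \<and> (\<forall>m\<in>set ms. 0 < m) \<and> sum_list ms = r}"

lemma expcoef_dg:
  assumes "\<forall>m>0. A m = dg (h m)"
  shows "expcoef A r v = (\<lambda>j. (\<Sum>ms\<in>Sr r. 1 / fact (length ms) * prod_list (map (\<lambda>m. h m j) ms)) * v j)"
proof -
  have "\<And>ms. ms \<in> Sr r \<Longrightarrow> ocomp_list (map A ms) v = (\<lambda>j. prod_list (map (\<lambda>m. h m j) ms) * v j)"
    by (rule ocomp_list_dg) (use assms in \<open>auto simp: Sr_def\<close>)
  then show ?thesis
    unfolding expcoef_def Sr_def[symmetric]
    by (auto simp: sum_distrib_right mult.assoc intro!: sum.cong)
qed

lemma len_le_sum: "\<forall>m\<in>set ms. (0::nat) < m \<Longrightarrow> length ms \<le> sum_list ms"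
  by (induction ms) auto

lemma finite_T: "finite {ms::nat list. length ms = k \<and> sum_list ms = r}"
proof -
  have "{ms::nat list. length ms = k \<and> sum_list ms = r} \<subseteq> {ms. set ms \<subseteq> {0..r} \<and> length ms = k}"
    by (auto simp: member_le_sum_list)
  moreover have "finite {ms. set ms \<subseteq> {0..r::nat} \<and> length ms = k}"
    by (rule finite_lists_length_eq) simp
  ultimately show ?thesis by (rule finite_subset)
qed

lemma pow_nth:
  fixes G :: "complex fps"
  shows "(G ^ k) $ r = (\<Sum>ms\<in>{ms. length ms = k \<and> sum_list ms = r}. prod_list (map (\<lambda>m. G $ m) ms))"
proof (cases "k = 0")
  case True
  have "{ms::nat list. length ms = 0 \<and> sum_list ms = r} = (if r = 0 then {[]} else {})" by auto
  then show ?thesis using True by simp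
next
  case False
  have "(G ^ k) $ r = (\<Sum>v\<in>natpermute r k. \<Prod>j\<in>{0..k - 1}. G $ (v ! j))"
    using False by (simp add: fps_power_nth)
  also have "\<dots> = (\<Sum>v\<in>natpermute r k. prod_list (map (\<lambda>m. G $ m) v))"
  proof (rule sum.cong)
    fix v assume "v \<in> natpermute r k"
    then have l: "length v = k" by (simp add: natpermute_def)
    have "prod_list (map (\<lambda>m. G $ m) v) = (\<Prod>i\<in>{0..<length v}. map (\<lambda>m. G $ m) v ! i)"
      by (simp add: prod.list_conv_set_nth)
    also have "\<dots> = (\<Prod>j\<in>{0..k - 1}. G $ (v ! j))"
      using False l by (intro prod.cong) (auto simp: nth_map, (metis One_nat_def Suc_pred le_imp_less_Suc length_greater_0_conv))
    finally show "(\<Prod>j\<in>{0..k - 1}. G $ (v ! j)) = prod_list (map (\<lambda>m. G $ m) v)" by simp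
  qed simp
  finally show ?thesis by (simp add: natpermute_def)
qed

lemma expcoef_scalar:
  fixes G :: "complex fps"
  assumes G0: "G $ 0 = 0"
  shows "(\<Sum>ms\<in>Sr r. 1 / fact (length ms) * prod_list (map (\<lambda>m. G $ m) ms)) = (fps_exp 1 oo G) $ r"
proof -
  let ?f = "\<lambda>ms. 1 / fact (length ms) * prod_list (map (\<lambda>m. G $ m) ms) :: complex"
  let ?T = "\<lambda>k. {ms::nat list. length ms = k \<and> sum_list ms = r}"
  have finS: "finite (Sr r)"
    by (rule finite_subset[of _ "\<Union>k\<in>{0..r}. ?T k"]) (auto simp: Sr_def finite_T)
  have "(\<Sum>ms\<in>Sr r. ?f ms) = (\<Sum>ms\<in>Sr r. \<Sum>k\<in>{0..r}. if length ms = k then ?f ms else 0)"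
    by (intro sum.cong) (auto simp: Sr_def)
  also have "\<dots> = (\<Sum>k\<in>{0..r}. \<Sum>ms\<in>Sr r. if length ms = k then ?f ms else 0)"
    by (rule sum.swap)
  also have "\<dots> = (\<Sum>k\<in>{0..r}. 1 / fact k * (G ^ k) $ r)"
  proof (rule sum.cong)
    fix k assume k: "k \<in> {0..r}"
    have "(\<Sum>ms\<in>Sr r. if length ms = k then ?f ms else 0) = (\<Sum>ms\<in>{ms\<in>Sr r. length ms = k}. ?f ms)"
      using finS by (rule sum.inter_filter[symmetric])
    also have "{ms\<in>Sr r. length ms = k} = {ms\<in>?T k. \<forall>m\<in>set ms. 0 < m}"
      using k by (auto simp: Sr_def)
    also have "(\<Sum>ms\<in>{ms\<in>?T k. \<forall>m\<in>set ms. 0 < m}. ?f ms) = (\<Sum>ms\<in>?T k. ?f ms)"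
    proof (rule sum.mono_neutral_left)
      show "finite (?T k)" by (rule finite_T)
      show "\<forall>i\<in>?T k - {ms \<in> ?T k. \<forall>m\<in>set ms. 0 < m}. ?f i = 0"
      proof
        fix ms assume "ms \<in> ?T k - {ms \<in> ?T k. \<forall>m\<in>set ms. 0 < m}"
        then obtain m where "m \<in> set ms" "m = 0" by auto
        then have "prod_list (map (\<lambda>m. G $ m) ms) = 0"
          using G0 by (auto simp: prod_list_zero_iff)
        then show "?f ms = 0" by simp
      qed
    qed auto
    also have "\<dots> = 1 / fact k * (G ^ k) $ r"
      by (simp add: pow_nth sum_distrib_left)
    finally show "(\<Sum>ms\<in>Sr r. if length ms = k then ?f ms else 0) = 1 / fact k * (G ^ k) $ r" .
  qed simp
  also have "\<dots> = (fps_exp 1 oo G) $ r"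
    by (simp add: fps_compose_nth)
  finally show ?thesis .
qed

lemma exp_log:
  fixes Q :: "complex fps"
  assumes "Q $ 0 = 1"
  shows "\<exists>g. g $ 0 = 0 \<and> fps_exp 1 oo g = Q"
proof -
  let ?b = "fps_exp (1::complex) - 1"
  have b0: "?b $ 0 = 0" by simp
  have b1: "?b $ 1 \<noteq> 0" by simp
  have ln: "fps_ln (1::complex) = fps_inv ?b" by (rule fps_ln_fps_exp_inv) simp
  have Q0: "(Q - 1) $ 0 = 0" using assms by simp
  define g where "g = fps_ln 1 oo (Q - 1)"
  have "g $ 0 = 0" by (simp add: g_def)
  moreover have "fps_exp 1 oo g = Q"
  proof -
    have "fps_exp 1 oo g = (fps_exp 1 oo fps_ln 1) oo (Q - 1)"
      unfolding g_def by (rule fps_compose_assoc) (use Q0 in simp_all)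
    also have "fps_exp (1::complex) oo fps_ln 1 = (?b + 1) oo fps_inv ?b"
      by (simp add: ln)
    also have "\<dots> = (?b oo fps_inv ?b) + (1 oo fps_inv ?b)"
      by (rule fps_compose_add_distrib)
    also have "\<dots> = fps_X + 1"
      by (simp only: fps_inv_right[OF b0 b1] fps_compose_1)
    also have "(fps_X + 1) oo (Q - 1) = Q"
      using Q0 by (simp add: fps_compose_add_distrib)
    finally show ?thesis .
  qed
  ultimately show ?thesis by blast
qed


definition gser :: "complex \<Rightarrow> complex \<Rightarrow> complex \<Rightarrow> nat \<Rightarrow> complex" where
  "gser a b c r = (if r = 0 then a else b * c ^ r)"

lemma inv_lin:
  fixes a b :: complex
  assumes "a \<noteq> 0"
  shows "inverse (fps_const a - fps_const b * fps_X) = Abs_fps (\<lambda>n. b ^ n / a ^ Suc n)"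
proof (rule fps_inverse_unique)
  show "(fps_const a - fps_const b * fps_X) * Abs_fps (\<lambda>n. b ^ n / a ^ Suc n) = 1"
  proof (rule fps_ext)
    fix n
    show "((fps_const a - fps_const b * fps_X) * Abs_fps (\<lambda>n. b ^ n / a ^ Suc n)) $ n = 1 $ n"
      using assms by (cases n) (simp_all add: algebra_simps mult.assoc)
  qed
qed

lemma lin_mult_nth:
  fixes a b :: complex
  shows "((fps_const a - fps_const b * fps_X) * F) $ r = a * F $ r - (if r = 0 then 0 else b * F $ (r - 1))"
proof -
  have "(fps_const a - fps_const b * fps_X) * F = fps_const a * F - fps_const b * (fps_X * F)"
    by (simp add: algebra_simps)
  then show ?thesis by simp
qed

lemma psi_plus_nth:
  assumes "q \<noteq> 0"
  shows "psi_plus q x $ r = gser q (q - inverse q) x r"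
proof -
  have eq: "psi_plus q x = (fps_const q - fps_const (x / q) * fps_X) * Abs_fps (\<lambda>n. x ^ n)"
    unfolding psi_plus_def using inv_lin[of 1 x] by (simp add: fps_const_1_eq_1[symmetric] del: fps_const_1_eq_1)
  show ?thesis unfolding eq using assms
    by (cases r) (simp_all add: lin_mult_nth gser_def field_simps)
qed

lemma inv_lin2:
  fixes a c :: complex
  assumes "a \<noteq> 0"
  shows "inverse (fps_const c * fps_X - fps_const a) = Abs_fps (\<lambda>n. - (c ^ n) / a ^ Suc n)"
proof (rule fps_inverse_unique)
  have e: "(fps_const c * fps_X - fps_const a) * F = fps_const c * (fps_X * F) - fps_const a * F" for F :: "complex fps"
    by (simp add: algebra_simps)
  show "(fps_const c * fps_X - fps_const a) * Abs_fps (\<lambda>n. - (c ^ n) / a ^ Suc n) = 1"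
  proof (rule fps_ext)
    fix n
    show "((fps_const c * fps_X - fps_const a) * Abs_fps (\<lambda>n. - (c ^ n) / a ^ Suc n)) $ n = 1 $ n"
      unfolding e using assms by (cases n) (simp_all add: field_simps)
  qed
qed

lemma inv_psi_plus_nth:
  assumes "q \<noteq> 0"
  shows "inverse (psi_plus q y) $ r = gser (inverse q) (- (q - inverse q)) (y / q^2) r"
proof -
  have i1: "(1 - fps_const y * fps_X) $ 0 \<noteq> 0" by simp
  have c0: "(fps_const q - fps_const (y / q) * fps_X) $ 0 \<noteq> 0" using assms by simp
  have eq: "inverse (psi_plus q y) = (fps_const 1 - fps_const y * fps_X) * Abs_fps (\<lambda>n. (y / q) ^ n / q ^ Suc n)"
    unfolding psi_plus_def fps_inverse_mult fps_inverse_idempotent[OF i1] inv_lin[OF assms]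
    by (simp add: mult.commute)
  show ?thesis unfolding eq using assms
    by (cases r) (simp_all add: lin_mult_nth gser_def field_simps power_divide power_mult_distrib
          power2_eq_square)
qed

lemma psi_minus_nth:
  assumes "q \<noteq> 0" "x \<noteq> 0"
  shows "psi_minus q x $ r = gser (inverse q) (- (q - inverse q)) (inverse x) r"
proof -
  have eq: "psi_minus q x = - ((fps_const (x / q) - fps_const q * fps_X) * Abs_fps (\<lambda>n. - (1 ^ n) / x ^ Suc n))"
    unfolding psi_minus_def using inv_lin2[OF assms(2), of 1] by (simp add: algebra_simps)
  show ?thesis unfolding eq using assms
    by (cases r) (simp_all add: lin_mult_nth gser_def field_simps power_divide)
qed

lemma inv_psi_minus_nth:
  assumes "q \<noteq> 0" "y \<noteq> 0"
  shows "inverse (psi_minus q y) $ r = gser q (q - inverse q) (q^2 / y) r"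
proof -
  have i1: "(fps_X - fps_const y) $ 0 \<noteq> 0" using assms by simp
  have yq: "y / q \<noteq> 0" using assms by simp
  have eq: "inverse (psi_minus q y) = - ((fps_const y - fps_const 1 * fps_X) * Abs_fps (\<lambda>n. - (q ^ n) / (y / q) ^ Suc n))"
    unfolding psi_minus_def fps_inverse_mult fps_inverse_idempotent[OF i1] inv_lin2[OF yq]
    by (simp add: algebra_simps)
  show ?thesis unfolding eq using assms
    by (cases r) (simp_all add: lin_mult_nth gser_def field_simps power_divide power_mult_distrib
          power2_eq_square)
qed


lemma cong_dvd: "cong_n n a b \<longleftrightarrow> int n dvd (a - b)"
  by (simp add: cong_n_def mod_eq_dvd_iff)

lemma ndvd_small:
  assumes "3 \<le> n" "c \<in> {1,2,-1,-2::int}"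
  shows "\<not> int n dvd c"
proof
  assume "int n dvd c"
  then have "int n dvd \<bar>c\<bar>" by simp
  moreover have "0 < \<bar>c\<bar>" using assms(2) by auto
  ultimately have "int n \<le> \<bar>c\<bar>" by (rule zdvd_imp_le)
  then show False using assms by auto
qed

lemma dvd_plus: "int n dvd A \<Longrightarrow> int n dvd B \<Longrightarrow> C = A + B \<Longrightarrow> int n dvd C"
  by simp
lemma dvd_minus: "int n dvd A \<Longrightarrow> int n dvd B \<Longrightarrow> C = A - B \<Longrightarrow> int n dvd C"
  by simp

locale ctx =
  fixes n :: nat and q d u :: complex and k :: int
  assumes n3: "n \<ge> 3" and q0: "q \<noteq> 0" and d0: "d \<noteq> 0" and gen: "generic q d"
    and kI: "k \<in> {0..<int n}" and u0: "u \<noteq> 0"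
begin

abbreviation "QQ \<equiv> q - inverse q"
definition xx :: "int \<Rightarrow> complex" where "xx j = (q1 q d) powi j * u"

lemma q1_0: "q1 q d \<noteq> 0" using q0 d0 by (simp add: q1_def)
lemma q3_0: "q3 q d \<noteq> 0" using q0 d0 by (simp add: q3_def)
lemma xx0: "xx j \<noteq> 0" using q1_0 u0 by (simp add: xx_def)
lemma xx_suc: "xx (j + 1) = q1 q d * xx j"
  using q1_0 by (simp add: xx_def power_int_add)
lemma xx_pred: "xx (j - 1) = xx j / q1 q d"
  using xx_suc[of "j - 1"] q1_0 by (simp add: field_simps)

lemma q2ne1: "q^2 \<noteq> 1"
proof
  assume "q^2 = 1"
  then have "(q1 q d) powi 0 * (q2 q d) powi 1 * (q3 q d) powi 0 = 1" by (simp add: q2_def)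
  moreover have "\<forall>a b c :: int. (q1 q d) powi a * (q2 q d) powi b * (q3 q d) powi c = 1 \<longrightarrow> a = b \<and> b = c"
    using gen unfolding generic_def by blast
  ultimately have "(0::int) = 1 \<and> (1::int) = 0" by blast
  then show False by simp
qed
lemma QQ0: "QQ \<noteq> 0"
proof
  assume "QQ = 0"
  then have "q * q = 1" using q0 by (simp add: field_simps)
  then show False using q2ne1 by (simp add: power2_eq_square)
qed
lemma q_ne_1: "q \<noteq> 1" using q2ne1 by auto
lemma q_ne_inv: "q \<noteq> inverse q" using QQ0 by auto

lemma q1_inj: "(q1 q d) powi a = 1 \<Longrightarrow> a = 0"
proof -
  assume "(q1 q d) powi a = 1"
  then have "(q1 q d) powi a * (q2 q d) powi 0 * (q3 q d) powi 0 = 1" by simp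
  moreover have "\<forall>a b c :: int. (q1 q d) powi a * (q2 q d) powi b * (q3 q d) powi c = 1 \<longrightarrow> a = b \<and> b = c"
    using gen unfolding generic_def by blast
  ultimately show "a = 0" by blast
qed

lemma xx_inj: "xx a = xx b \<Longrightarrow> a = b"
proof -
  assume "xx a = xx b"
  then have "(q1 q d) powi a = (q1 q d) powi b" using u0 by (simp add: xx_def)
  then have "(q1 q d) powi (a - b) = 1" using q1_0 by (simp add: power_int_diff)
  then show "a = b" using q1_inj[of "a - b"] by simp
qed

lemma y_rel: "(q1 q d) powi j * inverse (q3 q d) * u = q^2 * xx (j + 1)"
  using q0 d0 q1_0 by (simp add: xx_def power_int_add q1_def q3_def field_simps power2_eq_square)

end

lemma cong_shift: "cong_n n a b \<Longrightarrow> c - e = f - g + (a - b) \<Longrightarrow> (cong_n n c e \<longleftrightarrow> cong_n n f g)"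
  unfolding cong_dvd by (metis dvd_add_left_iff dvd_add_right_iff)

lemma plus_rel:
  fixes A D x a1 b1 c1 a0 b0 c0 :: complex
  assumes h1: "D * a1 = D * A * a0"
    and h2: "A*x*a1 - D*(b1*c1) = x*a0 - D*A*(b0*c0)"
    and h3: "\<And>t. 0 < t \<Longrightarrow> A*x*(b1*c1^t) - D*(b1*c1^(Suc t)) = x*(b0*c0^t) - D*A*(b0*c0^(Suc t))"
  shows "A * x * (if r < 0 then 0 else gser a1 b1 c1 (nat r)) - D * (if r + 1 < 0 then 0 else gser a1 b1 c1 (nat (r+1)))
       = x * (if r < 0 then 0 else gser a0 b0 c0 (nat r)) - D * A * (if r + 1 < 0 then 0 else gser a0 b0 c0 (nat (r+1)))"
proof -
  consider "r < -1" | "r = -1" | "r = 0" | "r > 0" by linarith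
  then show ?thesis
  proof cases
    case 1 then show ?thesis by simp
  next
    case 2 then show ?thesis using h1 by (simp add: gser_def)
  next
    case 3 then show ?thesis using h2 by (simp add: gser_def)
  next
    case 4
    define t where "t = nat r"
    have t: "r = int t" "0 < t" using 4 by (auto simp: t_def)
    have "nat (r + 1) = Suc t" using t by simp
    then show ?thesis using t h3[OF t(2)] by (simp add: gser_def)
  qed
qed

lemma minus_rel:
  fixes A D x a1 b1 c1 a0 b0 c0 :: complex
  assumes h1: "A * x * a1 = x * a0"
    and h2: "A*x*(b1*c1) - D*a1 = x*(b0*c0) - D*A*a0"
    and h3: "\<And>t. 0 < t \<Longrightarrow> A*x*(b1*c1^(Suc t)) - D*(b1*c1^t) = x*(b0*c0^(Suc t)) - D*A*(b0*c0^t)"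
  shows "A * x * (if 0 < r then 0 else gser a1 b1 c1 (nat (-r))) - D * (if 0 < r + 1 then 0 else gser a1 b1 c1 (nat (-(r+1))))
       = x * (if 0 < r then 0 else gser a0 b0 c0 (nat (-r))) - D * A * (if 0 < r + 1 then 0 else gser a0 b0 c0 (nat (-(r+1))))"
proof -
  consider "r > 0" | "r = 0" | "r = -1" | "r < -1" by linarith
  then show ?thesis
  proof cases
    case 1 then show ?thesis by simp
  next
    case 2 then show ?thesis using h1 by (simp add: gser_def)
  next
    case 3 then show ?thesis using h2 by (simp add: gser_def)
  next
    case 4
    define t where "t = nat (-(r+1))"
    have t: "-(r+1) = int t" "0 < t" using 4 by (auto simp: t_def)
    have "nat (- r) = Suc t" using t by simp
    moreover have "nat (-(r+1)) = t" using t by simp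
    ultimately show ?thesis using t h3[OF t(2)] by (simp add: gser_def)
  qed
qed

context ctx begin

definition kp :: "int \<Rightarrow> int \<Rightarrow> int \<Rightarrow> complex" where
  "kp i j r = (if r < 0 then 0 else kpc n q d k u i j (nat r))"
definition km :: "int \<Rightarrow> int \<Rightarrow> int \<Rightarrow> complex" where
  "km i j r = (if 0 < r then 0 else kmc n q d k u i j (nat (- r)))"

lemma kpc_eq: "kpc n q d k u i j s = (if cong_n n (j+i) k then gser q QQ (xx j) s
   else if cong_n n (j+i+1) k then gser (inverse q) (-QQ) (xx (j+1)) s else gser 1 0 0 s)"
  using q0 xx0 unfolding kpc_def
  by (simp add: psi_plus_nth inv_psi_plus_nth y_rel xx_def[symmetric] gser_def)

lemma kmc_eq: "kmc n q d k u i j s = (if cong_n n (j+i) k then gser (inverse q) (-QQ) (inverse (xx j)) s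
   else if cong_n n (j+i+1) k then gser q QQ (inverse (xx (j+1))) s else gser 1 0 0 s)"
proof -
  have e: "q^2 / (q^2 * xx (j+1)) = inverse (xx (j+1))" using q0 by (simp add: field_simps)
  have y: "q^2 * xx (j+1) \<noteq> 0" using q0 xx0 by simp
  show ?thesis using q0 xx0 y unfolding kmc_def
    by (simp add: psi_minus_nth inv_psi_minus_nth y_rel xx_def[symmetric] gser_def e)
qed

lemma cong_excl: "cong_n n a b \<Longrightarrow> cong_n n c e \<Longrightarrow> c - e = a - b + t \<Longrightarrow> t \<in> {1,2,-1,-2} \<Longrightarrow> False"
proof -
  assume h: "cong_n n a b" "cong_n n c e" "c - e = a - b + t" "t \<in> {1,2,-1,-2}"
  have "int n dvd (c - e) - (a - b)" using h(1,2) unfolding cong_dvd by (rule dvd_diff[rotated])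
  then have "int n dvd t" using h(3) by simp
  then show False using ndvd_small[OF n3 h(4)] by simp
qed

end

context ctx begin

lemma q1_eq: "q1 q d = d / q" by (simp add: q1_def)

lemma case_split4:
  obtains (A) "cong_n n i j'" "\<not> cong_n n i (j'+1)" "\<not> cong_n n i (j'-1)"
    | (B) "cong_n n i (j'+1)" "\<not> cong_n n i j'" "\<not> cong_n n i (j'-1)"
    | (C) "cong_n n i (j'-1)" "\<not> cong_n n i j'" "\<not> cong_n n i (j'+1)"
    | (D) "\<not> cong_n n i j'" "\<not> cong_n n i (j'+1)" "\<not> cong_n n i (j'-1)"
proof -
  have x1: "\<not> (cong_n n i j' \<and> cong_n n i (j'+1))"
    using cong_excl[of i j' i "j'+1" "-1"] by auto
  have x2: "\<not> (cong_n n i j' \<and> cong_n n i (j'-1))"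
    using cong_excl[of i j' i "j'-1" "1"] by auto
  have x3: "\<not> (cong_n n i (j'+1) \<and> cong_n n i (j'-1))"
    using cong_excl[of i "j'+1" i "j'-1" "2"] by auto
  show ?thesis using that x1 x2 x3 by blast
qed

lemma KE_plus:
  assumes h: "cong_n n (j' + p) k"
  shows "q powi cartan n i j' * xx p * kp i p r - d powi mmat n i j' * kp i p (r+1)
       = xx p * kp i (p-1) r - d powi mmat n i j' * q powi cartan n i j' * kp i (p-1) (r+1)"
proof -
  have c1: "cong_n n (p + i) k \<longleftrightarrow> cong_n n i j'" by (rule cong_shift[OF h]) simp
  have c2: "cong_n n (p + i + 1) k \<longleftrightarrow> cong_n n i (j' - 1)" by (rule cong_shift[OF h]) simp
  have c3: "cong_n n (p - 1 + i) k \<longleftrightarrow> cong_n n i (j' + 1)" by (rule cong_shift[OF h]) simp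
  have c4: "cong_n n (p - 1 + i + 1) k \<longleftrightarrow> cong_n n i j'" by (rule cong_shift[OF h]) simp
  have xm: "xx (p - 1) = xx p / q1 q d" by (rule xx_pred)
  have xp: "xx (p + 1) = q1 q d * xx p" by (rule xx_suc)
  note x0 = xx0[of p]
  show ?thesis
  proof (cases i j' rule: case_split4)
    case A
    have e1: "kp i p r = (if r < 0 then 0 else gser q QQ (xx p) (nat r))" for r
      unfolding kp_def kpc_eq using A c1 by simp
    have e0: "kp i (p-1) r = (if r < 0 then 0 else gser (inverse q) (-QQ) (xx p) (nat r))" for r
      unfolding kp_def kpc_eq using A c3 c4 by simp
    have ca: "cartan n i j' = 2" "mmat n i j' = 0" using A by (simp_all add: cartan_def mmat_def)
    show ?thesis unfolding e1 e0 ca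
      by (rule plus_rel) (use q0 QQ0 in \<open>simp_all add: gser_def field_simps power2_eq_square\<close>)
  next
    case B
    have e1: "kp i p r = (if r < 0 then 0 else gser 1 0 0 (nat r))" for r
      unfolding kp_def kpc_eq using B c1 c2 by simp
    have e0: "kp i (p-1) r = (if r < 0 then 0 else gser q QQ (xx p / q1 q d) (nat r))" for r
      unfolding kp_def kpc_eq using B c3 xm by simp
    have ca: "cartan n i j' = -1" "mmat n i j' = 1" using B by (simp_all add: cartan_def mmat_def)
    show ?thesis unfolding e1 e0 ca
      by (rule plus_rel) (use q0 d0 QQ0 x0 in \<open>simp_all add: gser_def field_simps q1_eq\<close>)
  next
    case C
    have e1: "kp i p r = (if r < 0 then 0 else gser (inverse q) (-QQ) (q1 q d * xx p) (nat r))" for r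
      unfolding kp_def kpc_eq using C c1 c2 xp by simp
    have e0: "kp i (p-1) r = (if r < 0 then 0 else gser 1 0 0 (nat r))" for r
      unfolding kp_def kpc_eq using C c3 c4 by simp
    have ca: "cartan n i j' = -1" "mmat n i j' = -1" using C by (simp_all add: cartan_def mmat_def)
    show ?thesis unfolding e1 e0 ca
      by (rule plus_rel) (use q0 d0 QQ0 x0 in \<open>simp_all add: gser_def field_simps q1_eq\<close>)
  next
    case D
    have e1: "kp i p r = kp i (p-1) r" for r
      unfolding kp_def kpc_eq using D c1 c2 c3 c4 by simp
    have ca: "cartan n i j' = 0" "mmat n i j' = 0" using D by (simp_all add: cartan_def mmat_def)
    show ?thesis unfolding e1 ca by simp
  qed
qed

lemma KE_minus:
  assumes h: "cong_n n (j' + p) k"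
  shows "q powi cartan n i j' * xx p * km i p r - d powi mmat n i j' * km i p (r+1)
       = xx p * km i (p-1) r - d powi mmat n i j' * q powi cartan n i j' * km i (p-1) (r+1)"
proof -
  have c1: "cong_n n (p + i) k \<longleftrightarrow> cong_n n i j'" by (rule cong_shift[OF h]) simp
  have c2: "cong_n n (p + i + 1) k \<longleftrightarrow> cong_n n i (j' - 1)" by (rule cong_shift[OF h]) simp
  have c3: "cong_n n (p - 1 + i) k \<longleftrightarrow> cong_n n i (j' + 1)" by (rule cong_shift[OF h]) simp
  have c4: "cong_n n (p - 1 + i + 1) k \<longleftrightarrow> cong_n n i j'" by (rule cong_shift[OF h]) simp
  have xm: "xx (p - 1) = xx p / q1 q d" by (rule xx_pred)
  have xp: "xx (p + 1) = q1 q d * xx p" by (rule xx_suc)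
  note x0 = xx0[of p]
  show ?thesis
  proof (cases i j' rule: case_split4)
    case A
    have e1: "km i p r = (if 0 < r then 0 else gser (inverse q) (-QQ) (inverse (xx p)) (nat (- r)))" for r
      unfolding km_def kmc_eq using A c1 by simp
    have e0: "km i (p-1) r = (if 0 < r then 0 else gser q QQ (inverse (xx p)) (nat (- r)))" for r
      unfolding km_def kmc_eq using A c3 c4 by simp
    have ca: "cartan n i j' = 2" "mmat n i j' = 0" using A by (simp_all add: cartan_def mmat_def)
    show ?thesis unfolding e1 e0 ca
      by (rule minus_rel) (use q0 QQ0 x0 in \<open>simp_all add: gser_def field_simps power2_eq_square\<close>)
  next
    case B
    have e1: "km i p r = (if 0 < r then 0 else gser 1 0 0 (nat (- r)))" for r
      unfolding km_def kmc_eq using B c1 c2 by simp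
    have e0: "km i (p-1) r = (if 0 < r then 0 else gser (inverse q) (-QQ) (inverse (xx p / q1 q d)) (nat (- r)))" for r
      unfolding km_def kmc_eq using B c3 xm by simp
    have ca: "cartan n i j' = -1" "mmat n i j' = 1" using B by (simp_all add: cartan_def mmat_def)
    show ?thesis unfolding e1 e0 ca
      by (rule minus_rel) (use q0 d0 QQ0 x0 in \<open>simp_all add: gser_def field_simps q1_eq\<close>)
  next
    case C
    have e1: "km i p r = (if 0 < r then 0 else gser q QQ (inverse (q1 q d * xx p)) (nat (- r)))" for r
      unfolding km_def kmc_eq using C c1 c2 xp by simp
    have e0: "km i (p-1) r = (if 0 < r then 0 else gser 1 0 0 (nat (- r)))" for r
      unfolding km_def kmc_eq using C c3 c4 by simp
    have ca: "cartan n i j' = -1" "mmat n i j' = -1" using C by (simp_all add: cartan_def mmat_def)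
    show ?thesis unfolding e1 e0 ca
      by (rule minus_rel) (use q0 d0 QQ0 x0 in \<open>simp_all add: gser_def field_simps q1_eq\<close>)
  next
    case D
    have e1: "km i p r = km i (p-1) r" for r
      unfolding km_def kmc_eq using D c1 c2 c3 c4 by simp
    have ca: "cartan n i j' = 0" "mmat n i j' = 0" using D by (simp_all add: cartan_def mmat_def)
    show ?thesis unfolding e1 ca by simp
  qed
qed

end

context ctx begin

lemma powi_neg_nat: "r < 0 \<Longrightarrow> (x::complex) powi r = inverse x ^ nat (- r)"
  by (metis nat_0_le neg_0_le_iff_le order_less_imp_le power_int_minus power_int_of_nat power_inverse minus_minus)

lemma powi_pos_nat: "0 \<le> r \<Longrightarrow> (x::complex) powi r = x ^ nat r"
  by (metis nat_0_le power_int_of_nat)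

lemma EF_scalar:
  "(if cong_n n (l + i) k then xx l powi r else 0) - (if cong_n n (l + i + 1) k then xx (l+1) powi r else 0)
   = inverse QQ * (kp i l r - km i l r)"
proof -
  have ex: "\<not> (cong_n n (l + i) k \<and> cong_n n (l + i + 1) k)"
    using cong_excl[of "l+i" k "l+i+1" k 1] by auto
  consider "r > 0" | "r = 0" | "r < 0" by linarith
  note rc = this
  show ?thesis
  proof (cases "cong_n n (l + i) k")
    case True
    with ex have nf: "\<not> cong_n n (l + i + 1) k" by blast
    show ?thesis using rc
    proof cases
      case 1 then show ?thesis using True nf QQ0 xx0[of l] by (simp add: kp_def km_def kpc_eq kmc_eq gser_def powi_pos_nat)
    next
      case 2 then show ?thesis using True nf QQ0 xx0[of l] by (simp add: kp_def km_def kpc_eq kmc_eq gser_def)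
    next
      case 3 then show ?thesis using True nf q0 QQ0 xx0[of l] by (simp add: kp_def km_def kpc_eq kmc_eq gser_def powi_neg_nat field_simps)
    qed
  next
    case False
    show ?thesis
    proof (cases "cong_n n (l + i + 1) k")
      case T2: True
      show ?thesis using rc
      proof cases
        case 1 then show ?thesis using False T2 q0 QQ0 xx0[of "l+1"] by (simp add: kp_def km_def kpc_eq kmc_eq gser_def powi_pos_nat field_simps)
      next
        case 2 then show ?thesis using False T2 QQ0 q0 xx0[of "l+1"] by (simp add: kp_def km_def kpc_eq kmc_eq gser_def field_simps)
      next
        case 3 then show ?thesis using False T2 q0 QQ0 xx0[of "l+1"] by (simp add: kp_def km_def kpc_eq kmc_eq gser_def powi_neg_nat field_simps)
      qed
    next
      case F2: False
      show ?thesis using False F2 by (simp add: kp_def km_def kpc_eq kmc_eq gser_def)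
    qed
  qed
qed

end

context ctx begin

definition cp :: "int \<Rightarrow> int \<Rightarrow> complex" where "cp i j = kpc n q d k u i j 0"
definition cm :: "int \<Rightarrow> int \<Rightarrow> complex" where "cm i j = kmc n q d k u i j 0"

lemma cp_ne: "cp i j \<noteq> 0"
  using q0 by (simp add: cp_def kpc_eq gser_def)
lemma cm_ne: "cm i j \<noteq> 0"
  using q0 by (simp add: cm_def kmc_eq gser_def)

definition gp :: "int \<Rightarrow> int \<Rightarrow> complex fps" where
  "gp i j = (SOME g. g $ 0 = 0 \<and> fps_exp 1 oo g = fps_const (inverse (cp i j)) * Abs_fps (kpc n q d k u i j))"
definition gm :: "int \<Rightarrow> int \<Rightarrow> complex fps" where
  "gm i j = (SOME g. g $ 0 = 0 \<and> fps_exp 1 oo g = fps_const (inverse (cm i j)) * Abs_fps (kmc n q d k u i j))"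

lemma gp_prop: "gp i j $ 0 = 0 \<and> fps_exp 1 oo gp i j = fps_const (inverse (cp i j)) * Abs_fps (kpc n q d k u i j)"
proof -
  have "(fps_const (inverse (cp i j)) * Abs_fps (kpc n q d k u i j)) $ 0 = 1"
    using cp_ne[of i j] by (simp add: cp_def)
  from exp_log[OF this] show ?thesis unfolding gp_def by (rule someI_ex)
qed
lemma gm_prop: "gm i j $ 0 = 0 \<and> fps_exp 1 oo gm i j = fps_const (inverse (cm i j)) * Abs_fps (kmc n q d k u i j)"
proof -
  have "(fps_const (inverse (cm i j)) * Abs_fps (kmc n q d k u i j)) $ 0 = 1"
    using cm_ne[of i j] by (simp add: cm_def)
  from exp_log[OF this] show ?thesis unfolding gm_def by (rule someI_ex)
qed

definition HH :: "int \<Rightarrow> int \<Rightarrow> op" where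
  "HH i l = dg (\<lambda>j. if 0 < l then gp i j $ nat l / QQ else if l < 0 then gm i j $ nat (- l) / (- QQ) else 0)"
definition KK :: "int \<Rightarrow> op" where "KK i = dg (cp i)"
definition KKi :: "int \<Rightarrow> op" where "KKi i = dg (cm i)"

lemma Kplus_eq: "Kplus q KK HH i r = VKp n q d k u i r"
proof (cases "r < 0")
  case True then show ?thesis by (simp add: Kplus_def VKp_def ozero_def)
next
  case False
  have A: "\<forall>m>0. osc QQ (HH i (int m)) = dg (\<lambda>j. gp i j $ m)"
    using QQ0 by (auto simp: osc_def HH_def dg_def fun_eq_iff)
  have "Kplus q KK HH i r v = VKp n q d k u i r v" for v
  proof -
    have "Kplus q KK HH i r v = KK i (expcoef (\<lambda>m. osc QQ (HH i (int m))) (nat r) v)"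
      using False by (simp add: Kplus_def)
    also have "\<dots> = (\<lambda>j. cp i j * ((fps_exp 1 oo gp i j) $ nat r * v j))"
      unfolding expcoef_dg[OF A] expcoef_scalar[OF gp_prop[THEN conjunct1]] by (simp add: KK_def dg_def)
    also have "\<dots> = VKp n q d k u i r v"
      using False cp_ne by (simp add: gp_prop VKp_def fun_eq_iff)
    finally show ?thesis .
  qed
  then show ?thesis by blast
qed

lemma Kminus_eq: "Kminus q KKi HH i r = VKm n q d k u i r"
proof (cases "0 < r")
  case True then show ?thesis by (simp add: Kminus_def VKm_def ozero_def)
next
  case False
  have A: "\<forall>m>0. osc (- QQ) (HH i (- int m)) = dg (\<lambda>j. gm i j $ m)"
    using QQ0 by (auto simp: osc_def HH_def dg_def fun_eq_iff)
  have "Kminus q KKi HH i r v = VKm n q d k u i r v" for v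
  proof -
    have "Kminus q KKi HH i r v = KKi i (expcoef (\<lambda>m. osc (- QQ) (HH i (- int m))) (nat (- r)) v)"
      using False by (simp add: Kminus_def)
    also have "\<dots> = (\<lambda>j. cm i j * ((fps_exp 1 oo gm i j) $ nat (- r) * v j))"
      unfolding expcoef_dg[OF A] expcoef_scalar[OF gm_prop[THEN conjunct1]] by (simp add: KKi_def dg_def)
    also have "\<dots> = VKm n q d k u i r v"
      using False cm_ne by (simp add: gm_prop VKm_def fun_eq_iff)
    finally show ?thesis .
  qed
  then show ?thesis by blast
qed

end

context ctx begin

abbreviation "Eo \<equiv> VE n q d k u"
abbreviation "Fo \<equiv> VF n q d k u"
abbreviation "Kp \<equiv> VKp n q d k u"
abbreviation "Km \<equiv> VKm n q d k u"

lemma VE_app: "Eo i m v l = (if cong_n n (i + l) k then xx l powi m * v (l - 1) else 0)"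
  by (simp add: VE_def xx_def)
lemma VF_app: "Fo i m v l = (if cong_n n (i + l + 1) k then xx (l + 1) powi m * v (l + 1) else 0)"
  by (simp add: VF_def xx_def)
lemma Kp_app: "Kp i r v l = kp i l r * v l"
  by (simp add: VKp_def kp_def)
lemma Km_app: "Km i r v l = km i l r * v l"
  by (simp add: VKm_def km_def)

lemma alg1:
  fixes A D x a b c e X V :: complex
  assumes "A * x * a - D * b = x * c - D * A * e"
  shows "A * (a * (X * x * V)) - D * (b * (X * V)) = X * x * (c * V) - D * A * (X * (e * V))"
proof -
  have "A * (a * (X * x * V)) - D * (b * (X * V)) = X * V * (A * x * a - D * b)" by (simp add: algebra_simps)
  also have "\<dots> = X * V * (x * c - D * A * e)" using assms by simp
  also have "\<dots> = X * x * (c * V) - D * A * (X * (e * V))" by (simp add: algebra_simps)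
  finally show ?thesis .
qed

lemma alg2:
  fixes A D x a b c e X V :: complex
  assumes "A * x * a - D * b = x * c - D * A * e"
  shows "c * (X * x * V) - D * A * (e * (X * V)) = A * (X * x * (a * V)) - D * (X * (b * V))"
proof -
  have "c * (X * x * V) - D * A * (e * (X * V)) = X * V * (x * c - D * A * e)" by (simp add: algebra_simps)
  also have "\<dots> = X * V * (A * x * a - D * b)" using assms by simp
  also have "\<dots> = A * (X * x * (a * V)) - D * (X * (b * V))" by (simp add: algebra_simps)
  finally show ?thesis .
qed

lemma KE_op_plus:
  "osub (osc (q powi cartan n i j) (Kp i r \<circ> Eo j (r'+1))) (osc (d powi mmat n i j) (Kp i (r+1) \<circ> Eo j r')) v
 = osub (Eo j (r'+1) \<circ> Kp i r) (osc (d powi mmat n i j * q powi cartan n i j) (Eo j r' \<circ> Kp i (r+1))) v"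
proof (rule ext)
  fix l
  show "osub (osc (q powi cartan n i j) (Kp i r \<circ> Eo j (r'+1))) (osc (d powi mmat n i j) (Kp i (r+1) \<circ> Eo j r')) v l
 = osub (Eo j (r'+1) \<circ> Kp i r) (osc (d powi mmat n i j * q powi cartan n i j) (Eo j r' \<circ> Kp i (r+1))) v l"
  proof (cases "cong_n n (j + l) k")
    case True
    have e: "xx l powi (r' + 1) = xx l powi r' * xx l" using xx0[of l] by (simp add: power_int_add)
    show ?thesis unfolding osub_def osc_def comp_def VE_app Kp_app using True
      apply (simp add: e)
      apply (rule alg1)
      apply (rule KE_plus[OF True])
      done
  next
    case False
    then show ?thesis unfolding osub_def osc_def comp_def VE_app Kp_app by simp
  qed
qed

lemma KE_op_minus:
  "osub (osc (q powi cartan n i j) (Km i r \<circ> Eo j (r'+1))) (osc (d powi mmat n i j) (Km i (r+1) \<circ> Eo j r')) v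
 = osub (Eo j (r'+1) \<circ> Km i r) (osc (d powi mmat n i j * q powi cartan n i j) (Eo j r' \<circ> Km i (r+1))) v"
proof (rule ext)
  fix l
  show "osub (osc (q powi cartan n i j) (Km i r \<circ> Eo j (r'+1))) (osc (d powi mmat n i j) (Km i (r+1) \<circ> Eo j r')) v l
 = osub (Eo j (r'+1) \<circ> Km i r) (osc (d powi mmat n i j * q powi cartan n i j) (Eo j r' \<circ> Km i (r+1))) v l"
  proof (cases "cong_n n (j + l) k")
    case True
    have e: "xx l powi (r' + 1) = xx l powi r' * xx l" using xx0[of l] by (simp add: power_int_add)
    show ?thesis unfolding osub_def osc_def comp_def VE_app Km_app using True
      apply (simp add: e)
      apply (rule alg1)
      apply (rule KE_minus[OF True])
      done
  next
    case False
    then show ?thesis unfolding osub_def osc_def comp_def VE_app Km_app by simp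
  qed
qed

lemma KF_op_plus:
  "osub (Kp i r \<circ> Fo j (r'+1)) (osc (d powi mmat n i j * q powi cartan n i j) (Kp i (r+1) \<circ> Fo j r')) v
 = osub (osc (q powi cartan n i j) (Fo j (r'+1) \<circ> Kp i r)) (osc (d powi mmat n i j) (Fo j r' \<circ> Kp i (r+1))) v"
proof (rule ext)
  fix l
  show "osub (Kp i r \<circ> Fo j (r'+1)) (osc (d powi mmat n i j * q powi cartan n i j) (Kp i (r+1) \<circ> Fo j r')) v l
 = osub (osc (q powi cartan n i j) (Fo j (r'+1) \<circ> Kp i r)) (osc (d powi mmat n i j) (Fo j r' \<circ> Kp i (r+1))) v l"
  proof (cases "cong_n n (j + l + 1) k")
    case True
    have h: "cong_n n (j + (l + 1)) k" using True by (simp add: add.assoc)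
    have e: "xx (l+1) powi (r' + 1) = xx (l+1) powi r' * xx (l+1)" using xx0[of "l+1"] by (simp add: power_int_add)
    show ?thesis unfolding osub_def osc_def comp_def VF_app Kp_app using True
      apply (simp add: e)
      apply (rule alg2)
      using KE_plus[OF h, of i r] by simp
  next
    case False
    then show ?thesis unfolding osub_def osc_def comp_def VF_app Kp_app by simp
  qed
qed

lemma KF_op_minus:
  "osub (Km i r \<circ> Fo j (r'+1)) (osc (d powi mmat n i j * q powi cartan n i j) (Km i (r+1) \<circ> Fo j r')) v
 = osub (osc (q powi cartan n i j) (Fo j (r'+1) \<circ> Km i r)) (osc (d powi mmat n i j) (Fo j r' \<circ> Km i (r+1))) v"
proof (rule ext)
  fix l
  show "osub (Km i r \<circ> Fo j (r'+1)) (osc (d powi mmat n i j * q powi cartan n i j) (Km i (r+1) \<circ> Fo j r')) v l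
 = osub (osc (q powi cartan n i j) (Fo j (r'+1) \<circ> Km i r)) (osc (d powi mmat n i j) (Fo j r' \<circ> Km i (r+1))) v l"
  proof (cases "cong_n n (j + l + 1) k")
    case True
    have h: "cong_n n (j + (l + 1)) k" using True by (simp add: add.assoc)
    have e: "xx (l+1) powi (r' + 1) = xx (l+1) powi r' * xx (l+1)" using xx0[of "l+1"] by (simp add: power_int_add)
    show ?thesis unfolding osub_def osc_def comp_def VF_app Km_app using True
      apply (simp add: e)
      apply (rule alg2)
      using KE_minus[OF h, of i r] by simp
  next
    case False
    then show ?thesis unfolding osub_def osc_def comp_def VF_app Km_app by simp
  qed
qed

end

lemma cong_sub: "cong_n n x y \<Longrightarrow> cong_n n x' y' \<Longrightarrow> (x - y) - (x' - y') = a - b \<Longrightarrow> cong_n n a b"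
  unfolding cong_dvd by (metis dvd_diff)

lemma cong_range_eq: "i \<in> {0..<int n} \<Longrightarrow> j \<in> {0..<int n} \<Longrightarrow> cong_n n i j \<Longrightarrow> i = j"
  by (simp add: cong_n_def)

context ctx begin

lemma EF_op:
  assumes "i \<in> {0..<int n}" "j \<in> {0..<int n}"
  shows "osub (Eo i a \<circ> Fo j b) (Fo j b \<circ> Eo i a) v
     = (if i = j then osc (inverse QQ) (osub (Kp i (a + b)) (Km i (a + b))) else ozero) v"
proof (rule ext)
  fix l
  have f1: "i + (l - 1) + 1 = l + i" "j + (l - 1) + 1 = l + j" "i + (l + 1) = l + i + 1" "i + l = l + i"
     "j + l + 1 = l + j + 1" "j + l = l + j" by simp_all
  show "osub (Eo i a \<circ> Fo j b) (Fo j b \<circ> Eo i a) v l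
     = (if i = j then osc (inverse QQ) (osub (Kp i (a + b)) (Km i (a + b))) else ozero) v l"
  proof (cases "i = j")
    case True
    have "osub (Eo i a \<circ> Fo j b) (Fo j b \<circ> Eo i a) v l =
      ((if cong_n n (l + i) k then xx l powi (a + b) else 0) - (if cong_n n (l + i + 1) k then xx (l+1) powi (a + b) else 0)) * v l"
      unfolding osub_def comp_def VE_app VF_app f1 True
      using xx0[of l] xx0[of "l+1"] by (simp add: power_int_add algebra_simps)
    also have "\<dots> = inverse QQ * (kp i l (a+b) - km i l (a+b)) * v l" by (simp only: EF_scalar)
    finally show ?thesis using True by (simp add: osc_def osub_def Kp_app Km_app algebra_simps)
  next
    case False
    have nc: "\<not> cong_n n i j" using cong_range_eq[OF assms] False by blast
    have a1: "\<not> (cong_n n (l + i) k \<and> cong_n n (l + j) k)"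
      using nc cong_sub[of n "l+i" k "l+j" k i j] by auto
    have a2: "\<not> (cong_n n (l + j + 1) k \<and> cong_n n (l + i + 1) k)"
      using nc cong_sub[of n "l+i+1" k "l+j+1" k i j] by auto
    show ?thesis unfolding osub_def comp_def VE_app VF_app f1 using False a1 a2
      by (auto simp: ozero_def)
  qed
qed

end

context ctx begin

lemma xx_l: "xx l = q1 q d * xx (l - 1)" using xx_suc[of "l - 1"] by simp

lemma EE_op:
  "osub (osc (d powi mmat n i j) (Eo i (r + 1) \<circ> Eo j s)) (osc (q powi cartan n i j) (Eo i r \<circ> Eo j (s + 1))) v
 = osub (osc (d powi mmat n i j * q powi cartan n i j) (Eo j s \<circ> Eo i (r + 1))) (Eo j (s + 1) \<circ> Eo i r) v"
proof (rule ext)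
  fix l
  let ?P1 = "cong_n n (i + l) k \<and> cong_n n (j + (l - 1)) k"
  let ?P2 = "cong_n n (j + l) k \<and> cong_n n (i + (l - 1)) k"
  have x1: "xx l powi (r + 1) = xx l powi r * (d / q * xx (l-1))" "xx (l-1) powi (s + 1) = xx (l-1) powi s * xx (l-1)"
    "xx l powi (s + 1) = xx l powi s * (d / q * xx (l-1))" "xx (l-1) powi (r + 1) = xx (l-1) powi r * xx (l-1)"
    using xx0[of l] xx0[of "l-1"] xx_l[of l] by (simp_all add: power_int_add q1_eq)
  have e1: "cong_n n i (j - 1)" if ?P1 using that cong_sub[of n "i+l" k "j+(l-1)" k i "j-1"] by auto
  have e2: "cong_n n i (j + 1)" if ?P2 using that cong_sub[of n "i+(l-1)" k "j+l" k i "j+1"] by auto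
  have x12: "\<not> (cong_n n i (j - 1) \<and> cong_n n i (j + 1))" using cong_excl[of i "j-1" i "j+1" "-2"] by auto
  have x13: "\<not> (cong_n n i (j - 1) \<and> cong_n n i j)" using cong_excl[of i "j-1" i "j" "-1"] by auto
  have x23: "\<not> (cong_n n i (j + 1) \<and> cong_n n i j)" using cong_excl[of i "j+1" i "j" "1"] by auto
  show "osub (osc (d powi mmat n i j) (Eo i (r + 1) \<circ> Eo j s)) (osc (q powi cartan n i j) (Eo i r \<circ> Eo j (s + 1))) v l
 = osub (osc (d powi mmat n i j * q powi cartan n i j) (Eo j s \<circ> Eo i (r + 1))) (Eo j (s + 1) \<circ> Eo i r) v l"
  proof (cases ?P1)
    case True
    then have c: "cong_n n i (j - 1)" by (rule e1)
    have np: "\<not> ?P2" using e2 c x12 by blast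
    have cm: "mmat n i j = -1" "cartan n i j = -1" using c x13 by (simp_all add: mmat_def cartan_def)
    show ?thesis unfolding osub_def osc_def comp_def VE_app using True np
      using q0 d0 xx0[of "l-1"] by (simp add: cm x1, auto simp: field_simps)
  next
    case False
    show ?thesis
    proof (cases ?P2)
      case True
      then have c: "cong_n n i (j + 1)" by (rule e2)
      have cm: "mmat n i j = 1" "cartan n i j = -1" using c x12 x23 by (simp_all add: mmat_def cartan_def)
      show ?thesis unfolding osub_def osc_def comp_def VE_app using True False
        using q0 d0 xx0[of "l-1"] by (simp add: cm x1, auto simp: field_simps)
    next
      case F2: False
      show ?thesis unfolding osub_def osc_def comp_def VE_app using F2 False by auto
    qed
  qed
qed


lemma powi_suc_eq: "z \<noteq> 0 \<Longrightarrow> z = c \<Longrightarrow> (z::complex) powi (m + 1) = z powi m * c"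
  by (simp add: power_int_add)

lemma FF_op:
  "osub (osc (d powi mmat n i j) (Fo i (r + 1) \<circ> Fo j s)) (osc (q powi (- cartan n i j)) (Fo i r \<circ> Fo j (s + 1))) v
 = osub (osc (d powi mmat n i j * q powi (- cartan n i j)) (Fo j s \<circ> Fo i (r + 1))) (Fo j (s + 1) \<circ> Fo i r) v"
proof (rule ext)
  fix l
  let ?P1 = "cong_n n (i + l + 1) k \<and> cong_n n (j + (l + 1) + 1) k"
  let ?P2 = "cong_n n (j + l + 1) k \<and> cong_n n (i + (l + 1) + 1) k"
  have y: "xx (l + 1 + 1) = d / q * xx (l + 1)" by (simp only: xx_suc q1_eq)
  have x1: "xx (l+1) powi (r + 1) = xx (l+1) powi r * xx (l+1)" "xx (l+1+1) powi (s + 1) = xx (l+1+1) powi s * (d / q * xx (l+1))"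
    "xx (l+1) powi (s + 1) = xx (l+1) powi s * xx (l+1)" "xx (l+1+1) powi (r + 1) = xx (l+1+1) powi r * (d / q * xx (l+1))"
    by (rule powi_suc_eq[OF xx0 refl] powi_suc_eq[OF xx0 y])+
  have e1: "cong_n n i (j + 1)" if ?P1 using that cong_sub[of n "i+l+1" k "j+(l+1)+1" k i "j+1"] by auto
  have e2: "cong_n n i (j - 1)" if ?P2 using that cong_sub[of n "i+(l+1)+1" k "j+l+1" k i "j-1"] by auto
  have x12: "\<not> (cong_n n i (j - 1) \<and> cong_n n i (j + 1))" using cong_excl[of i "j-1" i "j+1" "-2"] by auto
  have x13: "\<not> (cong_n n i (j - 1) \<and> cong_n n i j)" using cong_excl[of i "j-1" i "j" "-1"] by auto
  have x23: "\<not> (cong_n n i (j + 1) \<and> cong_n n i j)" using cong_excl[of i "j+1" i "j" "1"] by auto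
  show "osub (osc (d powi mmat n i j) (Fo i (r + 1) \<circ> Fo j s)) (osc (q powi (- cartan n i j)) (Fo i r \<circ> Fo j (s + 1))) v l
 = osub (osc (d powi mmat n i j * q powi (- cartan n i j)) (Fo j s \<circ> Fo i (r + 1))) (Fo j (s + 1) \<circ> Fo i r) v l"
  proof (cases ?P1)
    case True
    then have c: "cong_n n i (j + 1)" by (rule e1)
    have np: "\<not> ?P2" using e2 c x12 by blast
    have cm: "mmat n i j = 1" "cartan n i j = -1" using c x12 x23 by (simp_all add: mmat_def cartan_def)
    show ?thesis unfolding osub_def osc_def comp_def VF_app x1 using True np
      using q0 d0 xx0[of "l+1"] by (auto simp: cm field_simps)
  next
    case False
    show ?thesis
    proof (cases ?P2)
      case True
      then have c: "cong_n n i (j - 1)" by (rule e2)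
      have cm: "mmat n i j = -1" "cartan n i j = -1" using c x13 by (simp_all add: mmat_def cartan_def)
      show ?thesis unfolding osub_def osc_def comp_def VF_app x1 using True False
        using q0 d0 xx0[of "l+1"] by (auto simp: cm field_simps)
    next
      case F2: False
      show ?thesis unfolding osub_def osc_def comp_def VF_app using F2 False by auto
    qed
  qed
qed

lemma EE_zero: "Eo i a (Eo i b w) = (\<lambda>l. 0)"
proof (rule ext)
  fix l
  have "\<not> (cong_n n (i + l) k \<and> cong_n n (i + (l - 1)) k)"
    using cong_excl[of "i+(l-1)" k "i + l" k 1] by auto
  then show "Eo i a (Eo i b w) l = 0" unfolding VE_app by auto
qed

lemma EXE_zero: "Eo i a (Eo j b (Eo i c w)) = (\<lambda>l. 0)"
proof (rule ext)
  fix l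
  have "\<not> (cong_n n (i + l) k \<and> cong_n n (i + (l - 1 - 1)) k)"
    using cong_excl[of "i+(l-1-1)" k "i + l" k 2] by auto
  then show "Eo i a (Eo j b (Eo i c w)) l = 0" unfolding VE_app by auto
qed

lemma FF_zero: "Fo i a (Fo i b w) = (\<lambda>l. 0)"
proof (rule ext)
  fix l
  have "\<not> (cong_n n (i + l + 1) k \<and> cong_n n (i + (l + 1) + 1) k)"
    using cong_excl[of "i+l+1" k "i + (l+1) + 1" k 1] by auto
  then show "Fo i a (Fo i b w) l = 0" unfolding VF_app by auto
qed

lemma FXF_zero: "Fo i a (Fo j b (Fo i c w)) = (\<lambda>l. 0)"
proof (rule ext)
  fix l
  have "\<not> (cong_n n (i + l + 1) k \<and> cong_n n (i + (l + 1 + 1) + 1) k)"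
    using cong_excl[of "i+l+1" k "i + (l+1+1) + 1" k 2] by auto
  then show "Fo i a (Fo j b (Fo i c w)) l = 0" unfolding VF_app by auto
qed

lemma VE_zero: "Eo i m (\<lambda>l. 0) = (\<lambda>l. 0)" by (simp add: VE_app fun_eq_iff)
lemma VF_zero: "Fo i m (\<lambda>l. 0) = (\<lambda>l. 0)" by (simp add: VF_app fun_eq_iff)

lemma serre_E: "serre q Eo i j r1 r2 s v = (\<lambda>l. 0)"
  unfolding serre_def oadd_def osub_def osc_def comp_def EE_zero EXE_zero
  by (simp add: EE_zero[of j] EE_zero[of i] VE_zero)

lemma serre_F: "serre q Fo i j r1 r2 s v = (\<lambda>l. 0)"
  unfolding serre_def oadd_def osub_def osc_def comp_def FF_zero FXF_zero
  by (simp add: FF_zero[of j] FF_zero[of i] VF_zero)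

lemma EE_comm:
  assumes "\<not> cong_n n i (j + 1)" "\<not> cong_n n i (j - 1)"
  shows "Eo i r (Eo j s v) = Eo j s (Eo i r v)"
proof (rule ext)
  fix l
  have a: "\<not> (cong_n n (i + l) k \<and> cong_n n (j + (l - 1)) k)"
    using assms cong_sub[of n "i+l" k "j+(l-1)" k i "j-1"] by auto
  have b: "\<not> (cong_n n (j + l) k \<and> cong_n n (i + (l - 1)) k)"
    using assms cong_sub[of n "i+(l-1)" k "j+l" k i "j+1"] by auto
  show "Eo i r (Eo j s v) l = Eo j s (Eo i r v) l" unfolding VE_app using a b by auto
qed

lemma FF_comm:
  assumes "\<not> cong_n n i (j + 1)" "\<not> cong_n n i (j - 1)"
  shows "Fo i r (Fo j s v) = Fo j s (Fo i r v)"
proof (rule ext)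
  fix l
  have a: "\<not> (cong_n n (i + l + 1) k \<and> cong_n n (j + (l + 1) + 1) k)"
    using assms cong_sub[of n "i+l+1" k "j+(l+1)+1" k i "j+1"] by auto
  have b: "\<not> (cong_n n (j + l + 1) k \<and> cong_n n (i + (l + 1) + 1) k)"
    using assms cong_sub[of n "i+(l+1)+1" k "j+l+1" k i "j-1"] by auto
  show "Fo i r (Fo j s v) l = Fo j s (Fo i r v) l" unfolding VF_app using a b by auto
qed


end

lemma lin_gen: "lin_op (\<lambda>v l. c l * v (l + s))"
proof -
  have "(\<lambda>l. c l * v (l + s)) \<in> Vfin" if "v \<in> Vfin" for v
  proof -
    have "{l. c l * v (l + s) \<noteq> 0} \<subseteq> (\<lambda>j. j - s) ` {j. v j \<noteq> 0}"
      by (auto intro!: image_eqI[where x = "_ + s"])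
    moreover have "finite ((\<lambda>j. j - s) ` {j. v j \<noteq> 0})" using that by (simp add: Vfin_def)
    ultimately show ?thesis unfolding Vfin_def by (auto intro: finite_subset)
  qed
  then show ?thesis unfolding lin_op_def by (auto simp: fun_eq_iff algebra_simps)
qed

lemma diag_comm: "(\<lambda>v l. f l * v l) \<circ> (\<lambda>v l. g l * (v l :: complex)) = (\<lambda>v l. g l * v l) \<circ> (\<lambda>v l. f l * v l)"
  by (auto simp: fun_eq_iff)

context ctx begin

lemma Eo_fun: "Eo i m = (\<lambda>v l. (if cong_n n (i + l) k then xx l powi m else 0) * v (l + (-1)))"
  by (auto simp: fun_eq_iff VE_app)
lemma Fo_fun: "Fo i m = (\<lambda>v l. (if cong_n n (i + l + 1) k then xx (l + 1) powi m else 0) * v (l + 1))"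
  by (auto simp: fun_eq_iff VF_app)
lemma Kp_fun: "Kp i r = (\<lambda>v l. kp i l r * v l)" by (auto simp: fun_eq_iff Kp_app)
lemma Km_fun: "Km i r = (\<lambda>v l. km i l r * v l)" by (auto simp: fun_eq_iff Km_app)
lemma dg_lin: "lin_op (dg f)"
  using lin_gen[of f 0] by (simp add: dg_def)

lemma cp_cm: "cp i l * cm i l = 1"
  using q0 by (simp add: cp_def cm_def kpc_eq kmc_eq gser_def)

lemma cm_cp: "cm i l * cp i l = 1"
  using cp_cm[of i l] by (simp add: mult.commute)

lemma module: "En_module n q d Eo Fo HH KK KKi"
proof -
  have KPe: "Kplus q KK HH = Kp" by (rule ext, rule ext, rule Kplus_eq)
  have KMe: "Kminus q KKi HH = Km" by (rule ext, rule ext, rule Kminus_eq)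
  have Kfun: "(if s then Kp else Km) i r = (\<lambda>v l. (if s then kp i l r else km i l r) * v l)" for s i r
    by (cases s) (simp_all add: Kp_fun Km_fun)
  show ?thesis unfolding En_module_def Let_def KPe KMe
  proof (intro conjI)
    show "\<forall>i\<in>{0..<int n}. \<forall>m. lin_op (Eo i m) \<and> lin_op (Fo i m)"
      unfolding Eo_fun Fo_fun by (intro ballI allI conjI; rule lin_gen)
    show "\<forall>i\<in>{0..<int n}. \<forall>l. l \<noteq> 0 \<longrightarrow> lin_op (HH i l)" unfolding HH_def by (intro ballI allI impI) (rule dg_lin)
    show "\<forall>i\<in>{0..<int n}. lin_op (KK i) \<and> lin_op (KKi i)" by (simp add: KK_def KKi_def dg_lin)
    show "\<forall>i\<in>{0..<int n}. oeq (KK i \<circ> KKi i) id \<and> oeq (KKi i \<circ> KK i) id"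
      unfolding oeq_def KK_def KKi_def dg_def by (simp add: fun_eq_iff cp_cm cm_cp mult.assoc[symmetric])
    show "\<forall>s t. \<forall>i\<in>{0..<int n}. \<forall>j\<in>{0..<int n}. \<forall>r r'.
      oeq ((if s then Kp else Km) i r \<circ> (if t then Kp else Km) j r') ((if t then Kp else Km) j r' \<circ> (if s then Kp else Km) i r)"
      unfolding Kfun oeq_def by (simp add: comp_def mult.left_commute)
    show "\<forall>s. \<forall>i\<in>{0..<int n}. \<forall>j\<in>{0..<int n}. \<forall>r r'.
       oeq (osub (osc (q powi cartan n i j) ((if s then Kp else Km) i r \<circ> Eo j (r' + 1)))
                 (osc (d powi mmat n i j) ((if s then Kp else Km) i (r + 1) \<circ> Eo j r')))
           (osub (Eo j (r' + 1) \<circ> (if s then Kp else Km) i r)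
                 (osc (d powi mmat n i j * q powi cartan n i j) (Eo j r' \<circ> (if s then Kp else Km) i (r + 1))))"
      unfolding oeq_def by (auto simp: KE_op_plus KE_op_minus)
    show "\<forall>s. \<forall>i\<in>{0..<int n}. \<forall>j\<in>{0..<int n}. \<forall>r r'.
       oeq (osub ((if s then Kp else Km) i r \<circ> Fo j (r' + 1))
                 (osc (d powi mmat n i j * q powi cartan n i j) ((if s then Kp else Km) i (r + 1) \<circ> Fo j r')))
           (osub (osc (q powi cartan n i j) (Fo j (r' + 1) \<circ> (if s then Kp else Km) i r))
                 (osc (d powi mmat n i j) (Fo j r' \<circ> (if s then Kp else Km) i (r + 1))))"
      unfolding oeq_def by (auto simp: KF_op_plus KF_op_minus)
    show "\<forall>i\<in>{0..<int n}. \<forall>j\<in>{0..<int n}. \<forall>a b.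
       oeq (osub (Eo i a \<circ> Fo j b) (Fo j b \<circ> Eo i a))
           (if i = j then osc (inverse (q - inverse q)) (osub ((if True then Kp else Km) i (a + b)) ((if False then Kp else Km) i (a + b)))
            else ozero)"
      unfolding oeq_def using EF_op by simp
    show "\<forall>i\<in>{0..<int n}. \<forall>j\<in>{0..<int n}. \<forall>r s.
       oeq (osub (osc (d powi mmat n i j) (Eo i (r + 1) \<circ> Eo j s))
                 (osc (q powi cartan n i j) (Eo i r \<circ> Eo j (s + 1))))
           (osub (osc (d powi mmat n i j * q powi cartan n i j) (Eo j s \<circ> Eo i (r + 1)))
                 (Eo j (s + 1) \<circ> Eo i r))"
      unfolding oeq_def using EE_op by simp
    show "\<forall>i\<in>{0..<int n}. \<forall>j\<in>{0..<int n}. \<forall>r s.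
       oeq (osub (osc (d powi mmat n i j) (Fo i (r + 1) \<circ> Fo j s))
                 (osc (q powi (- cartan n i j)) (Fo i r \<circ> Fo j (s + 1))))
           (osub (osc (d powi mmat n i j * q powi (- cartan n i j)) (Fo j s \<circ> Fo i (r + 1)))
                 (Fo j (s + 1) \<circ> Fo i r))"
      unfolding oeq_def using FF_op by simp
    show "\<forall>i\<in>{0..<int n}. \<forall>j\<in>{0..<int n}. (cong_n n j (i + 1) \<or> cong_n n j (i - 1)) \<longrightarrow>
       (\<forall>r1 r2 s. oeq (oadd (serre q Eo i j r1 r2 s) (serre q Eo i j r2 r1 s)) ozero \<and>
                  oeq (oadd (serre q Fo i j r1 r2 s) (serre q Fo i j r2 r1 s)) ozero)"
      unfolding oeq_def by (simp add: oadd_def serre_E serre_F ozero_def)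
    show "\<forall>i\<in>{0..<int n}. \<forall>j\<in>{0..<int n}. (\<not> cong_n n i j \<and> \<not> cong_n n i (j + 1) \<and> \<not> cong_n n i (j - 1)) \<longrightarrow>
       (\<forall>r s. oeq (Eo i r \<circ> Eo j s) (Eo j s \<circ> Eo i r) \<and> oeq (Fo i r \<circ> Fo j s) (Fo j s \<circ> Fo i r))"
      unfolding oeq_def by (auto intro: EE_comm FF_comm)
  qed
qed

end

lemma dm: "(0::int) \<le> r \<Longrightarrow> r < N \<Longrightarrow> (N*t + r) div N = t \<and> (N*t + r) mod N = r"
  by (metis add.commute add_cancel_left_right div_mult_self1 div_pos_pos_trivial mod_mult_self2 mod_pos_pos_trivial mult.commute not_less_iff_gr_or_eq order_le_less_trans)
lemma l1: "(0::int) < N \<Longrightarrow> l mod N = 0 \<Longrightarrow> (l - 1) div N = l div N - 1 \<and> (l - 1) mod N = N - 1"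
proof -
  assume a: "0 < N" "l mod N = 0"
  have e: "l - 1 = N * (l div N - 1) + (N - 1)" using a div_mult_mod_eq[of l N] by (simp add: algebra_simps)
  have "(N * (l div N - 1) + (N - 1)) div N = l div N - 1 \<and> (N * (l div N - 1) + (N - 1)) mod N = N - 1"
    using dm[of "N - 1" N "l div N - 1"] a by simp
  then show ?thesis by (simp only: e[symmetric])
qed
lemma l2: "(0::int) < N \<Longrightarrow> l mod N \<noteq> 0 \<Longrightarrow> (l - 1) div N = l div N \<and> (l - 1) mod N = l mod N - 1"
proof -
  assume a: "0 < N" "l mod N \<noteq> 0"
  have "0 \<le> l mod N" "l mod N < N" using a by simp_all
  then have b: "0 \<le> l mod N - 1" "l mod N - 1 < N" using a by linarith+
  have e: "l - 1 = N * (l div N) + (l mod N - 1)" using div_mult_mod_eq[of l N] by (simp add: algebra_simps)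
  have "(N * (l div N) + (l mod N - 1)) div N = l div N \<and> (N * (l div N) + (l mod N - 1)) mod N = l mod N - 1"
    using dm[OF b, of "l div N"] by simp
  then show ?thesis by (simp only: e[symmetric])
qed

lemma cong_sym: "cong_n n a b \<longleftrightarrow> cong_n n b a" by (auto simp: cong_n_def)

context ctx begin

lemma deg_diff: "deg n k l a = deg n k (l - 1) a + (if (k - a) mod int n = l mod int n then 1 else 0)"
proof -
  have N: "0 < int n" using n3 by simp
  have t: "0 \<le> (k - a) mod int n" "(k - a) mod int n < int n" using N by simp_all
  show ?thesis
  proof (cases "l mod int n = 0")
    case True
    with l1[OF N True] t show ?thesis unfolding deg_def by auto
  next
    case False
    with l2[OF N False] t show ?thesis unfolding deg_def by auto
  qed
qed

lemma deg_step:
  assumes "i \<in> {0..<int n}" "a \<in> {0..<int n}" "cong_n n (i + l) k"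
  shows "deg n k l a = deg n k (l - 1) a + unitv i a"
proof -
  have h: "cong_n n k (i + l)" using assms(3) cong_sym by blast
  have "(k - a) mod int n = l mod int n \<longleftrightarrow> cong_n n (k - a) l" by (simp add: cong_n_def)
  also have "\<dots> \<longleftrightarrow> cong_n n i a" by (rule cong_shift[OF h]) simp
  also have "\<dots> \<longleftrightarrow> i = a" using cong_range_eq[OF assms(1,2)] by (auto simp: cong_n_def)
  finally show ?thesis using deg_diff[of l a] by (simp add: unitv_def eq_commute)
qed

lemma dg_Vhom: "v \<in> Vhom n (deg n k) \<alpha> \<Longrightarrow> dg f v \<in> Vhom n (deg n k) \<alpha>"
  using dg_lin[of f] unfolding Vhom_def lin_op_def by (auto simp: dg_def)

lemma graded: "graded n (deg n k) Eo Fo HH KK KKi"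
  unfolding graded_def
proof (intro allI ballI conjI impI)
  fix \<alpha> i m v
  assume i: "i \<in> {0..<int n}" and v: "v \<in> Vhom n (deg n k) \<alpha>"
  have vf: "v \<in> Vfin" using v by (simp add: Vhom_def)
  have lE: "lin_op (Eo i m)" and lF: "lin_op (Fo i m)" unfolding Eo_fun Fo_fun by (rule lin_gen)+
  show "Eo i m v \<in> Vhom n (deg n k) (\<lambda>a. \<alpha> a + unitv i a)"
    unfolding Vhom_def
  proof (intro CollectI conjI allI impI ballI)
    show "Eo i m v \<in> Vfin" using lE vf by (simp add: lin_op_def)
    fix l a assume ne: "Eo i m v l \<noteq> 0" and a: "a \<in> {0..<int n}"
    then have c: "cong_n n (i + l) k" and vl: "v (l - 1) \<noteq> 0" by (auto simp: VE_app split: if_splits)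
    have "deg n k (l - 1) a = \<alpha> a" using v vl a by (simp add: Vhom_def)
    then show "deg n k l a = \<alpha> a + unitv i a" using deg_step[OF i a c] by simp
  qed
  show "Fo i m v \<in> Vhom n (deg n k) (\<lambda>a. \<alpha> a - unitv i a)"
    unfolding Vhom_def
  proof (intro CollectI conjI allI impI ballI)
    show "Fo i m v \<in> Vfin" using lF vf by (simp add: lin_op_def)
    fix l a assume ne: "Fo i m v l \<noteq> 0" and a: "a \<in> {0..<int n}"
    then have c: "cong_n n (i + (l + 1)) k" and vl: "v (l + 1) \<noteq> 0" by (auto simp: VF_app add.assoc split: if_splits)
    have "deg n k (l + 1) a = \<alpha> a" using v vl a by (simp add: Vhom_def)
    then show "deg n k l a = \<alpha> a - unitv i a" using deg_step[OF i a c] by simp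
  qed
next
  fix \<alpha> i l v
  assume "v \<in> Vhom n (deg n k) \<alpha>"
  then show "HH i l v \<in> Vhom n (deg n k) \<alpha>" unfolding HH_def by (rule dg_Vhom)
next
  fix \<alpha> i v
  assume "v \<in> Vhom n (deg n k) \<alpha>"
  then show "KK i v \<in> Vhom n (deg n k) \<alpha>" "KKi i v \<in> Vhom n (deg n k) \<alpha>"
    unfolding KK_def KKi_def by (rule dg_Vhom)+
qed

end

context ctx begin

lemma cong_pick:
  assumes "m < n"
  shows "cong_n n (j + int m + c) k \<longleftrightarrow> m = nat ((k - j - c) mod int n)"
proof -
  have "cong_n n (j + int m + c) k \<longleftrightarrow> cong_n n (int m) (k - j - c)"
    unfolding cong_dvd by (simp add: algebra_simps)
  also have "\<dots> \<longleftrightarrow> int m = (k - j - c) mod int n"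
    using assms by (simp add: cong_n_def)
  also have "\<dots> \<longleftrightarrow> m = nat ((k - j - c) mod int n)"
    using n3 by (auto simp: nat_eq_iff)
  finally show ?thesis .
qed

lemma level: "level n KKi 1"
  unfolding level_def
proof (intro ballI)
  fix v assume "v \<in> Vfin"
  have A: "\<forall>m\<in>set [0..<n]. KKi (int m) = dg (cm (int m))" by (simp add: KKi_def)
  have "ocomp_list (map (\<lambda>i. KKi (int i)) [0..<n]) v = (\<lambda>j. prod_list (map (\<lambda>m. cm (int m) j) [0..<n]) * v j)"
    using ocomp_list_dg[OF A] by simp
  also have "\<dots> = (\<lambda>j. 1 * v j)"
  proof (rule ext)
    fix j
    let ?m0 = "nat ((k - j - 0) mod int n)" and ?m1 = "nat ((k - j - 1) mod int n)"
    have mem: "?m0 \<in> {0..<n}" "?m1 \<in> {0..<n}" using n3 by (auto simp: nat_less_iff)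
    have "prod_list (map (\<lambda>m. cm (int m) j) [0..<n]) = (\<Prod>m\<in>{0..<n}. cm (int m) j)"
      by (simp add: prod.distinct_set_conv_list[symmetric])
    also have "\<dots> = (\<Prod>m\<in>{0..<n}. (if m = ?m0 then inverse q else 1) * (if m = ?m1 then q else 1))"
    proof (rule prod.cong)
      fix m assume m: "m \<in> {0..<n}"
      have c0: "cong_n n (j + int m + 0) k \<longleftrightarrow> m = ?m0" by (rule cong_pick) (use m in simp)
      have c1: "cong_n n (j + int m + 1) k \<longleftrightarrow> m = ?m1" by (rule cong_pick) (use m in simp)
      have ex: "\<not> (cong_n n (j + int m) k \<and> cong_n n (j + int m + 1) k)"
        using cong_excl[of "j + int m" k "j + int m + 1" k 1] by auto
      show "cm (int m) j = (if m = ?m0 then inverse q else 1) * (if m = ?m1 then q else 1)"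
        using c0 c1 ex by (auto simp: cm_def kmc_eq gser_def)
    qed simp
    also have "\<dots> = inverse q * q"
      using mem by (simp add: prod.distrib prod.delta)
    also have "\<dots> = 1" using q0 by simp
    finally show "prod_list (map (\<lambda>m. cm (int m) j) [0..<n]) * v j = 1 * v j" by simp
  qed
  finally show "ocomp_list (map (\<lambda>i. KKi (int i)) [0..<n]) v = (\<lambda>j. 1 * v j)" .
qed

end

definition ev :: "int \<Rightarrow> vec" where "ev j = (\<lambda>l. if l = j then 1 else 0)"

context ctx begin

lemma kp_sep:
  assumes "\<forall>i\<in>{0..<int n}. \<forall>r. kp i l r = kp i l' r"
  shows "l = l'"
proof -
  define i0 where "i0 = (k - l) mod int n"
  have i0: "i0 \<in> {0..<int n}" using n3 by (simp add: i0_def)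
  have c: "cong_n n (l + i0) k" by (simp add: i0_def cong_n_def mod_add_right_eq)
  have e0: "kp i0 l 0 = kp i0 l' 0" and e1: "kp i0 l 1 = kp i0 l' 1" using assms i0 by auto
  have ex: "\<not> (cong_n n (l' + i0) k \<and> cong_n n (l' + i0 + 1) k)"
    using cong_excl[of "l' + i0" k "l' + i0 + 1" k 1] by auto
  have c': "cong_n n (l' + i0) k"
  proof (rule ccontr)
    assume nc: "\<not> cong_n n (l' + i0) k"
    show False
    proof (cases "cong_n n (l' + i0 + 1) k")
      case True
      then show False using e0 c nc q_ne_inv by (simp add: kp_def kpc_eq gser_def)
    next
      case False
      then show False using e0 c nc q_ne_1 by (simp add: kp_def kpc_eq gser_def)
    qed
  qed
  have "QQ * xx l = QQ * xx l'" using e1 c c' by (simp add: kp_def kpc_eq gser_def)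
  then have "xx l = xx l'" using QQ0 by simp
  then show ?thesis by (rule xx_inj)
qed

lemma KPe: "Kplus q KK HH = Kp" by (rule ext, rule ext, rule Kplus_eq)
lemma KMe: "Kminus q KKi HH = Km" by (rule ext, rule ext, rule Kminus_eq)

lemma eig_val:
  assumes "v \<in> eigsp n Kp Km lam" "v l \<noteq> 0" "i \<in> {0..<int n}"
  shows "kp i l r = lam True i r"
proof -
  have "Kp i r v l = lam True i r * v l" using assms(1,3) unfolding eigsp_def by auto
  then show ?thesis using assms(2) by (simp add: Kp_app)
qed

lemma tame: "tame n (Kplus q KK HH) (Kminus q KKi HH)"
  unfolding tame_def weighted_def KPe KMe
proof (intro conjI ballI allI impI)
  fix v assume v: "v \<in> Vfin"
  define S where "S = {j. v j \<noteq> 0}"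
  have fS: "finite S" using v by (simp add: Vfin_def S_def)
  define ws where "ws = map (\<lambda>j. (\<lambda>l. if l = j then v j else 0)) (sorted_list_of_set S)"
  show "\<exists>ws. (\<forall>w\<in>set ws. \<exists>lam. w \<in> eigsp n Kp Km lam) \<and> v = (\<lambda>j. \<Sum>w\<leftarrow>ws. w j)"
  proof (intro exI conjI)
    show "\<forall>w\<in>set ws. \<exists>lam. w \<in> eigsp n Kp Km lam"
    proof
      fix w assume "w \<in> set ws"
      then obtain j0 where w: "w = (\<lambda>l. if l = j0 then v j0 else 0)" by (auto simp: ws_def)
      have "{l. w l \<noteq> 0} \<subseteq> {j0}" by (auto simp: w)
      then have "w \<in> Vfin" unfolding Vfin_def by (auto intro: finite_subset)
      then have "w \<in> eigsp n Kp Km (\<lambda>s i r. if s then kp i j0 r else km i j0 r)"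
        unfolding eigsp_def by (auto simp: w Kp_app Km_app fun_eq_iff)
      then show "\<exists>lam. w \<in> eigsp n Kp Km lam" by blast
    qed
    show "v = (\<lambda>j. \<Sum>w\<leftarrow>ws. w j)"
    proof (rule ext)
      fix l
      have "(\<Sum>w\<leftarrow>ws. w l) = (\<Sum>j\<leftarrow>sorted_list_of_set S. if l = j then v j else 0)"
        by (simp add: ws_def o_def)
      also have "\<dots> = (\<Sum>j\<in>S. if l = j then v j else 0)"
        using fS by (simp add: sum_list_distinct_conv_sum_set)
      also have "\<dots> = v l" using fS by (simp add: S_def)
      finally show "v l = (\<Sum>w\<leftarrow>ws. w l)" by simp
    qed
  qed
next
  fix lam v w
  assume v: "v \<in> eigsp n Kp Km lam" and w: "w \<in> eigsp n Kp Km lam" and nz: "v \<noteq> vzero"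
  obtain l0 where l0: "v l0 \<noteq> 0" using nz by (auto simp: vzero_def)
  have supp: "l = l0" if "x \<in> eigsp n Kp Km lam" "x l \<noteq> 0" for x l
  proof (rule kp_sep, intro ballI allI)
    fix i r assume i: "i \<in> {0..<int n}"
    show "kp i l r = kp i l0 r" using eig_val[OF that i] eig_val[OF v l0 i] by simp
  qed
  show "\<exists>c. w = (\<lambda>j. c * v j)"
  proof (intro exI ext)
    fix l
    show "w l = w l0 / v l0 * v l"
    proof (cases "l = l0")
      case True then show ?thesis using l0 by simp
    next
      case False
      then have "w l = 0" "v l = 0" using supp[OF w] supp[OF v] by blast+
      then show ?thesis by simp
    qed
  qed
qed

end

lemma ev_Vfin: "ev j \<in> Vfin"
proof -
  have "{l. ev j l \<noteq> 0} \<subseteq> {j}" by (auto simp: ev_def)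
  then show ?thesis unfolding Vfin_def by (auto intro: finite_subset)
qed

context ctx begin

lemma find_basis:
  assumes W: "subspace_V W" and cE: "\<forall>i\<in>{0..<int n}. \<forall>m. Eo i m ` W \<subseteq> W"
  shows "v \<in> W \<Longrightarrow> v \<noteq> vzero \<Longrightarrow> \<exists>j. ev j \<in> W"
proof (induction "card {l. v l \<noteq> 0}" arbitrary: v rule: less_induct)
  case less
  have vf: "v \<in> Vfin" using less.prems W by (auto simp: subspace_V_def)
  let ?S = "{l. v l \<noteq> 0}"
  have fS: "finite ?S" using vf by (simp add: Vfin_def)
  obtain j0 where j0: "v j0 \<noteq> 0" using less.prems by (auto simp: vzero_def)
  show ?case
  proof (cases "?S = {j0}")
    case True
    have "(\<lambda>l. inverse (v j0) * v l) \<in> W" using W less.prems by (auto simp: subspace_V_def)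
    moreover have "(\<lambda>l. inverse (v j0) * v l) = ev j0"
    proof (rule ext)
      fix l show "inverse (v j0) * v l = ev j0 l"
        using True j0 by (cases "l = j0") (auto simp: ev_def)
    qed
    ultimately show ?thesis by auto
  next
    case False
    then obtain j1 where j1: "v j1 \<noteq> 0" "j1 \<noteq> j0" using j0 by blast
    define i where "i = (k - j0 - 1) mod int n"
    have i: "i \<in> {0..<int n}" using n3 by (simp add: i_def)
    have ci: "cong_n n (i + (j0 + 1)) k" by (simp add: i_def cong_n_def mod_add_left_eq)
    define c where "c = xx (j1 + 1)"
    define w where "w = (\<lambda>l. Eo i 1 v l + (- c) * Eo i 0 v l)"
    have wW: "w \<in> W"
    proof -
      have "Eo i 1 v \<in> W" "Eo i 0 v \<in> W" using cE i less.prems(1) by (auto simp: image_subset_iff)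
      note h = this
      have sc: "\<forall>c. \<forall>v\<in>W. (\<lambda>j. c * v j) \<in> W" and ad: "\<forall>v\<in>W. \<forall>w\<in>W. (\<lambda>j. v j + w j) \<in> W"
        using W by (simp_all add: subspace_V_def)
      have "(\<lambda>l. (- c) * Eo i 0 v l) \<in> W" by (rule sc[rule_format, OF h(2)])
      then show ?thesis unfolding w_def by (rule ad[rule_format, OF h(1)])
    qed
    have wl: "w l = (if cong_n n (i + l) k then (xx l - c) * v (l - 1) else 0)" for l
      using xx0[of l] by (simp add: w_def VE_app algebra_simps)
    have sub: "{l. w l \<noteq> 0} \<subseteq> (\<lambda>j. j + 1) ` (?S - {j1})"
    proof
      fix l assume "l \<in> {l. w l \<noteq> 0}"
      then have "v (l - 1) \<noteq> 0" "l - 1 \<noteq> j1" by (auto simp: wl c_def split: if_splits)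
      then show "l \<in> (\<lambda>j. j + 1) ` (?S - {j1})" by (auto intro!: image_eqI[where x = "l - 1"])
    qed
    have "card {l. w l \<noteq> 0} \<le> card ((\<lambda>j. j + 1) ` (?S - {j1}))"
      by (rule card_mono) (use fS sub in auto)
    also have "\<dots> \<le> card (?S - {j1})" by (rule card_image_le) (use fS in auto)
    also have "\<dots> < card ?S" using fS j1 by (intro psubset_card_mono) auto
    finally have lt: "card {l. w l \<noteq> 0} < card ?S" .
    have "w (j0 + 1) \<noteq> 0"
    proof -
      have "xx (j0 + 1) \<noteq> xx (j1 + 1)" using j1 xx_inj[of "j0+1" "j1+1"] by auto
      then show ?thesis using ci j0 by (simp add: wl c_def)
    qed
    then have "w \<noteq> vzero" by (auto simp: vzero_def fun_eq_iff)
    from less.hyps[OF lt wW this] show ?thesis .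
  qed
qed

lemma ev_E: "Eo ((k - (j + 1)) mod int n) 0 (ev j) = ev (j + 1)"
proof (rule ext)
  fix l
  have "cong_n n ((k - (j + 1)) mod int n + (j + 1)) k" by (simp add: cong_n_def mod_add_left_eq)
  then show "Eo ((k - (j + 1)) mod int n) 0 (ev j) l = ev (j + 1) l"
    by (auto simp: VE_app ev_def)
qed

lemma ev_F: "Fo ((k - j) mod int n) 0 (ev j) = ev (j - 1)"
proof (rule ext)
  fix l
  have "cong_n n ((k - j) mod int n + (j - 1) + 1) k" by (simp add: cong_n_def mod_add_left_eq)
  then show "Fo ((k - j) mod int n) 0 (ev j) l = ev (j - 1) l"
    by (auto simp: VF_app ev_def)
qed

lemma irreducible: "irreducible_mod n Eo Fo HH KK KKi"
  unfolding irreducible_mod_def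
proof (intro conjI allI impI)
  show "Vfin \<noteq> {vzero}"
  proof
    assume "Vfin = {vzero}"
    then have "ev 0 = vzero" using ev_Vfin[of 0] by auto
    then have "ev 0 0 = vzero 0" by simp
    then show False by (simp add: ev_def vzero_def)
  qed
next
  fix W
  assume a: "subspace_V W \<and>
        (\<forall>i\<in>{0..<int n}. (\<forall>m. Eo i m ` W \<subseteq> W \<and> Fo i m ` W \<subseteq> W) \<and>
            (\<forall>l. l \<noteq> 0 \<longrightarrow> HH i l ` W \<subseteq> W) \<and> KK i ` W \<subseteq> W \<and> KKi i ` W \<subseteq> W)"
  then have W: "subspace_V W" and cE: "\<forall>i\<in>{0..<int n}. \<forall>m. Eo i m ` W \<subseteq> W"
    and cF: "\<forall>i\<in>{0..<int n}. \<forall>m. Fo i m ` W \<subseteq> W" by auto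
  show "W = {vzero} \<or> W = Vfin"
  proof (cases "W = {vzero}")
    case True then show ?thesis by simp
  next
    case False
    then obtain v where v: "v \<in> W" "v \<noteq> vzero" using W by (auto simp: subspace_V_def)
    obtain j where j: "ev j \<in> W" using find_basis[OF W cE v] by blast
    have allev: "ev t \<in> W" for t
    proof (induction t rule: int_induct[where k = j])
      case base then show ?case by (rule j)
    next
      case (step1 i)
      have "(k - (i + 1)) mod int n \<in> {0..<int n}" using n3 by simp
      then have "Eo ((k - (i + 1)) mod int n) 0 (ev i) \<in> W" using cE step1.IH by (auto simp: image_subset_iff)
      then show ?case by (simp add: ev_E)
    next
      case (step2 i)
      have "(k - i) mod int n \<in> {0..<int n}" using n3 by simp
      then have "Fo ((k - i) mod int n) 0 (ev i) \<in> W" using cF step2.IH by (auto simp: image_subset_iff)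
      then show ?case by (simp add: ev_F)
    qed
    have "v \<in> W" if vf: "v \<in> Vfin" for v
    proof -
      have fin: "finite {l. v l \<noteq> 0}" using vf by (simp add: Vfin_def)
      have "(\<lambda>l. if l \<in> S then v l else 0) \<in> W" if "finite S" for S
        using that
      proof (induction S rule: finite_induct)
        case empty
        then show ?case using W by (simp add: subspace_V_def vzero_def)
      next
        case (insert x F)
        have sc: "\<forall>c. \<forall>v\<in>W. (\<lambda>j. c * v j) \<in> W" and ad: "\<forall>v\<in>W. \<forall>w\<in>W. (\<lambda>j. v j + w j) \<in> W"
          using W by (simp_all add: subspace_V_def)
        have "(\<lambda>l. v x * ev x l) \<in> W" by (rule sc[rule_format, OF allev[of x]])
        then have "(\<lambda>l. (if l \<in> F then v l else 0) + v x * ev x l) \<in> W"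
          by (rule ad[rule_format, OF insert.IH])
        moreover have "(\<lambda>l. (if l \<in> F then v l else 0) + v x * ev x l) = (\<lambda>l. if l \<in> insert x F then v l else 0)"
          using insert.hyps(2) by (auto simp: ev_def fun_eq_iff)
        ultimately show ?case by simp
      qed
      note h = this[OF fin]
      have "(\<lambda>l. if l \<in> {l. v l \<noteq> 0} then v l else 0) = v" by auto
      then show ?thesis using h by simp
    qed
    then have "W = Vfin" using W by (auto simp: subspace_V_def)
    then show ?thesis by simp
  qed
qed

end

theorem mainTheorem2:
  fixes n :: nat and q d u :: complex and k :: int
  assumes "n \<ge> 3" and "q \<noteq> 0" and "d \<noteq> 0" and "generic q d"
    and "k \<in> {0..<int n}" and "u \<noteq> 0"
  shows "\<exists>H K Kinv.
     En_module n q d (VE n q d k u) (VF n q d k u) H K Kinv \<and>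
     (\<forall>i\<in>{0..<int n}. \<forall>r. oeq (Kplus q K H i r) (VKp n q d k u i r)
                          \<and> oeq (Kminus q Kinv H i r) (VKm n q d k u i r)) \<and>
     irreducible_mod n (VE n q d k u) (VF n q d k u) H K Kinv \<and>
     tame n (Kplus q K H) (Kminus q Kinv H) \<and>
     graded n (deg n k) (VE n q d k u) (VF n q d k u) H K Kinv \<and>
     level n Kinv 1"
proof -
  interpret ctx n q d u k using assms by unfold_locales
  show ?thesis
    apply (rule exI[of _ HH], rule exI[of _ KK], rule exI[of _ KKi])
    using module irreducible tame graded level by (simp add: oeq_def Kplus_eq Kminus_eq)
qed


end
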